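(* Let the setting be as in the context, with $\mathsf Z$ a topological space and $\mathscr Z$ its Borel $\sigma$-algebra. Suppose Assumption (A) holds with data $(g,n,m,d)$, let $m',d'>0$ satisfy $m+2m'>1$, $\beta(m+2m')<1$, $d'\ge d/(m+2m'-1)$, and let $\ell$ be the associated weight function. Suppose further that: (i) $P$ has the Feller property, i.e. $z\mapsto\int h(z')P(z,dz')$ is bounded and continuous whenever $h$ is bounded and continuous; (ii) $c$, $r$ and $z\mapsto\int|r(z')|P(z,dz')$ are continuous; (iii) $\ell$ and $z\mapsto\int\ell(z')P(z,dz')$ are continuous. Then $\psi^*$ and $v^*$ are continuous.
   Context: $P$ is a stochastic kernel on $(\mathsf Z,\mathscr Z)$, $P^0(z,\cdot)=\delta_z$, $P^n(z,B)=\int P(z',B)P^{n-1}(z,dz')$; $(Z_t)$ is a time-homogeneous Markov process with kernel $P$ adapted to a filtration $(\mathscr F_t)$; $\mathbb E_z h(Z_t)=\int h\,dP^t(z,\cdot)$. $\mathscr M$ is the set of a.s. finite $\mathbb N_0$-valued stopping times. $\beta\in(0,1)$; $r,c:\mathsf Z\to\mathbb R$ measurable. $v^*(z)=\sup_{\tau\in\mathscr M}\mathbb E_z\{\sum_{t=0}^{\tau-1}\beta^tc(Z_t)+\beta^\tau r(Z_\tau)\}$, $\psi^*(z)=c(z)+\beta\int v^*(z')P(z,dz')$. Assumption (A): there exist measurable $g:\mathsf Z\to\mathbb R_+$, $n\in\mathbb N_0$, $m,d\ge0$ with $\beta m<1$ such that $\max\{\int|r|dP^n(z,\cdot),\int|c|dP^n(z,\cdot)\}\le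 g(z)$ and $\int g(z')P(z,dz')\le mg(z)+d$ for all $z$. Weight function: $\ell(z)=m'\big(\sum_{t=1}^{n-1}\mathbb E_z|r(Z_t)|+\sum_{t=0}^{n-1}\mathbb E_z|c(Z_t)|\big)+g(z)+d'$. *)

theory Defs
  imports "HOL-Probability.Probability"
begin

primrec kpow :: "('z::topological_space \<Rightarrow> 'z measure) \<Rightarrow> nat \<Rightarrow> 'z \<Rightarrow> 'z measure" where
  "kpow P 0 z = return borel z"
| "kpow P (Suc k) z = kpow P k z \<bind> P"

text \<open>The Markov property is stated as: for A in F_t and Borel B,
  Prob(A and X_(t+1) in B) = E[1_A P(X_t, B)], i.e. Prob(X_(t+1) in B | F_t) = P(X_t, B).\<close>
definition markov_process ::
  "('z::topological_space \<Rightarrow> 'z measure) \<Rightarrow> 'z \<Rightarrow> 'w measure \<Rightarrow> (nat \<Rightarrow> 'w measure) \<Rightarrow> (nat \<Rightarrow> 'w \<Rightarrow> 'z) \<Rightarrow> bool"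
where
  "markov_process P z M F X \<longleftrightarrow>
     prob_space M
   \<and> (\<forall>t. space (F t) = space M \<and> sets (F t) \<subseteq> sets M)
   \<and> (\<forall>s t. s \<le> t \<longrightarrow> sets (F s) \<subseteq> sets (F t))
   \<and> (\<forall>t. X t \<in> F t \<rightarrow>\<^sub>M borel)
   \<and> (AE \<omega> in M. X 0 \<omega> = z)
   \<and> (\<forall>t. \<forall>A\<in>sets (F t). \<forall>B\<in>sets borel.
        measure M (A \<inter> {\<omega>\<in>space M. X (Suc t) \<omega> \<in> B})
          = (\<integral>\<omega>. indicator A \<omega> * measure (P (X t \<omega>)) B \<partial>M))"

definition enat_stopping_time :: "(nat \<Rightarrow> 'w measure) \<Rightarrow> ('w \<Rightarrow> enat) \<Rightarrow> bool" where
  "enat_stopping_time F \<tau> \<longleftrightarrow> (\<forall>t::nat. Measurable.pred (F t) (\<lambda>\<omega>. \<tau> \<omega> \<le> enat t))"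

definition v_star ::
  "real \<Rightarrow> ('z \<Rightarrow> real) \<Rightarrow> ('z \<Rightarrow> real) \<Rightarrow> ('z \<Rightarrow> 'w measure) \<Rightarrow> ('z \<Rightarrow> nat \<Rightarrow> 'w measure)
    \<Rightarrow> ('z \<Rightarrow> nat \<Rightarrow> 'w \<Rightarrow> 'z) \<Rightarrow> 'z \<Rightarrow> real"
where
  "v_star \<beta> r c M F X z =
     (SUP \<tau> \<in> {\<tau>. enat_stopping_time (F z) \<tau> \<and> (AE \<omega> in M z. \<tau> \<omega> \<noteq> \<infinity>)}.
        \<integral>\<omega>. (\<Sum>t<the_enat (\<tau> \<omega>). \<beta> ^ t * c (X z t \<omega>))
              + \<beta> ^ the_enat (\<tau> \<omega>) * r (X z (the_enat (\<tau> \<omega>)) \<omega>) \<partial>M z)"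

definition psi_star ::
  "('z \<Rightarrow> 'z measure) \<Rightarrow> real \<Rightarrow> ('z \<Rightarrow> real) \<Rightarrow> ('z \<Rightarrow> real) \<Rightarrow> ('z \<Rightarrow> 'w measure)
    \<Rightarrow> ('z \<Rightarrow> nat \<Rightarrow> 'w measure) \<Rightarrow> ('z \<Rightarrow> nat \<Rightarrow> 'w \<Rightarrow> 'z) \<Rightarrow> 'z \<Rightarrow> real"
where
  "psi_star P \<beta> r c M F X z = c z + \<beta> * (\<integral>z'. v_star \<beta> r c M F X z' \<partial>P z)"

text \<open>Weight function ell, using E_z h(Z_t) = int h dP^t(z,.).\<close>
definition ell ::
  "('z::topological_space \<Rightarrow> 'z measure) \<Rightarrow> ('z \<Rightarrow> real) \<Rightarrow> ('z \<Rightarrow> real) \<Rightarrow> ('z \<Rightarrow> real)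
    \<Rightarrow> nat \<Rightarrow> real \<Rightarrow> real \<Rightarrow> 'z \<Rightarrow> real"
where
  "ell P r c g n m' d' z =
     m' * ((\<Sum>t\<in>{1..<n}. \<integral>z'. \<bar>r z'\<bar> \<partial>kpow P t z) + (\<Sum>t<n. \<integral>z'. \<bar>c z'\<bar> \<partial>kpow P t z))
     + g z + d'"

end

theory Submission
  imports Defs
begin


locale kern =
  fixes P :: "'z::topological_space \<Rightarrow> 'z measure"
  assumes kernel: "P \<in> borel \<rightarrow>\<^sub>M prob_algebra borel"
begin

lemma P_sub[measurable]: "P \<in> borel \<rightarrow>\<^sub>M subprob_algebra borel"
  using kernel by (rule measurable_prob_algebraD)

lemma sets_P[simp, measurable_cong]: "sets (P y) = sets borel"
  using measurable_space[OF kernel, of y] by (simp add: space_prob_algebra)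

lemma space_P[simp]: "space (P y) = UNIV"
  using sets_eq_imp_space_eq[OF sets_P] by simp

lemma meas_P[simp]: "(P y) \<rightarrow>\<^sub>M N = borel \<rightarrow>\<^sub>M N"
  by (rule measurable_cong_sets) auto

lemma prob_P: "prob_space (P y)"
  using measurable_space[OF kernel, of y] by (simp add: space_prob_algebra)

lemma emeasure_P: "emeasure (P y) B = ennreal (measure (P y) B)"
proof -
  interpret prob_space "P y" by (rule prob_P)
  show ?thesis by (rule emeasure_eq_measure)
qed

lemma emeasure_P_UNIV[simp]: "emeasure (P y) UNIV = 1"
  using prob_space.emeasure_space_1[OF prob_P, of y] by simp

lemma kpow_meas: "kpow P t \<in> borel \<rightarrow>\<^sub>M prob_algebra borel"
proof (induction t)
  case 0
  then show ?case using measurable_return_prob_space by (simp add: kpow.simps(1)[abs_def])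
next
  case (Suc t)
  have "(\<lambda>z. kpow P t z \<bind> P) \<in> borel \<rightarrow>\<^sub>M prob_algebra borel"
    by (rule measurable_bind_prob_space[OF Suc kernel])
  then show ?case by simp
qed

lemma kpow_sub[measurable]: "kpow P t \<in> borel \<rightarrow>\<^sub>M subprob_algebra borel"
  using kpow_meas by (rule measurable_prob_algebraD)

lemma sets_kpow[simp, measurable_cong]: "sets (kpow P t y) = sets borel"
  using measurable_space[OF kpow_meas, of y] by (simp add: space_prob_algebra)

lemma space_kpow[simp]: "space (kpow P t y) = UNIV"
  using sets_eq_imp_space_eq[OF sets_kpow] by simp

lemma meas_kpow[simp]: "(kpow P t y) \<rightarrow>\<^sub>M N = borel \<rightarrow>\<^sub>M N"
  by (rule measurable_cong_sets) auto

lemma prob_kpow: "prob_space (kpow P t y)"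
  using measurable_space[OF kpow_meas, of y] by (simp add: space_prob_algebra)

lemma nn_kpow_0: "h \<in> borel_measurable borel \<Longrightarrow> (\<integral>\<^sup>+x. h x \<partial>kpow P 0 y) = h y"
  by (simp add: nn_integral_return)

lemma nn_kpow_Suc: "h \<in> borel_measurable borel \<Longrightarrow>
   (\<integral>\<^sup>+x. h x \<partial>kpow P (Suc t) y) = (\<integral>\<^sup>+x. (\<integral>\<^sup>+u. h u \<partial>P x) \<partial>kpow P t y)"
proof -
  have "P \<in> kpow P t y \<rightarrow>\<^sub>M subprob_algebra borel"
    using measurable_cong_sets[OF sets_kpow refl, of t y "subprob_algebra borel"] P_sub by simp
  moreover assume "h \<in> borel_measurable borel"
  ultimately show ?thesis by (simp add: nn_integral_bind[where B=borel])
qed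

lemma return_bind_P[simp]: "return borel y \<bind> P = P y"
  using bind_return[OF P_sub, of y] by simp

lemma kpow_1: "kpow P (Suc 0) y = P y"
  by simp

lemma nn_kpow_comp: "h \<in> borel_measurable borel \<Longrightarrow>
   (\<integral>\<^sup>+x. h x \<partial>kpow P (a + b) y) = (\<integral>\<^sup>+x. (\<integral>\<^sup>+u. h u \<partial>kpow P a x) \<partial>kpow P b y)"
proof (induction a arbitrary: h)
  case 0
  have "(\<integral>\<^sup>+x. (\<integral>\<^sup>+u. h u \<partial>kpow P 0 x) \<partial>kpow P b y) = (\<integral>\<^sup>+x. h x \<partial>kpow P b y)"
    by (rule nn_integral_cong) (use 0 in \<open>simp add: nn_integral_return\<close>)
  then show ?case by simp
next
  case (Suc a)
  have m: "(\<lambda>x. \<integral>\<^sup>+u. h u \<partial>P x) \<in> borel_measurable borel"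
    using Suc.prems by measurable
  have "(\<integral>\<^sup>+x. h x \<partial>kpow P (Suc a + b) y) = (\<integral>\<^sup>+x. h x \<partial>kpow P (Suc (a + b)) y)" by simp
  also have "\<dots> = (\<integral>\<^sup>+x. (\<integral>\<^sup>+u. h u \<partial>P x) \<partial>kpow P (a+b) y)"
    by (rule nn_kpow_Suc[OF Suc.prems])
  also have "\<dots> = (\<integral>\<^sup>+x. (\<integral>\<^sup>+u. (\<integral>\<^sup>+v. h v \<partial>P u) \<partial>kpow P a x) \<partial>kpow P b y)"
    by (rule Suc.IH[OF m])
  also have "\<dots> = (\<integral>\<^sup>+x. (\<integral>\<^sup>+u. h u \<partial>kpow P (Suc a) x) \<partial>kpow P b y)"
    by (rule nn_integral_cong) (rule nn_kpow_Suc[OF Suc.prems, symmetric])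
  finally show ?case .
qed

lemma nn_kpow_Suc': "h \<in> borel_measurable borel \<Longrightarrow>
   (\<integral>\<^sup>+x. h x \<partial>kpow P (Suc t) y) = (\<integral>\<^sup>+x. (\<integral>\<^sup>+u. h u \<partial>kpow P t x) \<partial>P y)"
  using nn_kpow_comp[of h t "Suc 0" y] by (simp add: kpow_1)


lemma bind_nonneg:
  fixes g :: "'z \<Rightarrow> real"
  assumes L: "sets L = sets borel"
    and g[measurable]: "g \<in> borel_measurable borel" and g0: "\<And>x. 0 \<le> g x"
    and fin: "(\<integral>\<^sup>+x. g x \<partial>(L \<bind> P)) < \<infinity>"
  shows "integrable (L \<bind> P) g" "integrable L (\<lambda>y. \<integral>x. g x \<partial>P y)"
    "(\<integral>x. g x \<partial>(L \<bind> P)) = (\<integral>y. (\<integral>x. g x \<partial>P y) \<partial>L)"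
    "AE y in L. integrable (P y) g"
proof -
  have spL: "space L = UNIV" using sets_eq_imp_space_eq[OF L] by simp
  have PL[measurable]: "P \<in> L \<rightarrow>\<^sub>M subprob_algebra borel"
    unfolding measurable_cong_sets[OF L refl, of "subprob_algebra borel"] by (rule P_sub)
  have sLP[measurable_cong]: "sets (L \<bind> P) = sets borel"
    by (rule sets_bind[where N=borel]) (auto simp: spL)
  have gLP[measurable]: "g \<in> borel_measurable (L \<bind> P)"
    unfolding measurable_cong_sets[OF sLP refl] by (rule g)
  have nnb: "(\<integral>\<^sup>+x. g x \<partial>(L \<bind> P)) = (\<integral>\<^sup>+y. (\<integral>\<^sup>+x. g x \<partial>P y) \<partial>L)"
    by (rule nn_integral_bind[OF _ PL]) measurable
  show i1: "integrable (L \<bind> P) g"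
    by (rule integrableI_nonneg) (use g0 fin in auto)
  have m1[measurable]: "(\<lambda>y. \<integral>\<^sup>+x. g x \<partial>P y) \<in> borel_measurable L"
    by measurable
  have m2[measurable]: "(\<lambda>y. \<integral>x. g x \<partial>P y) \<in> borel_measurable L"
    by measurable
  have "AE y in L. (\<integral>\<^sup>+x. g x \<partial>P y) \<noteq> \<infinity>"
    by (rule nn_integral_PInf_AE[OF m1]) (use fin nnb in auto)
  then show "AE y in L. integrable (P y) g"
  proof (rule AE_mp, intro AE_I2 impI)
    fix y assume "(\<integral>\<^sup>+x. g x \<partial>P y) \<noteq> \<infinity>"
    then show "integrable (P y) g"
      by (intro integrableI_nonneg) (auto simp: g0 top.not_eq_extremum)
  qed
  from \<open>AE y in L. (\<integral>\<^sup>+x. g x \<partial>P y) \<noteq> \<infinity>\<close>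
  have AEeq: "AE y in L. (\<integral>\<^sup>+x. g x \<partial>P y) = ennreal (\<integral>x. g x \<partial>P y)"
  proof (rule AE_mp, intro AE_I2 impI)
    fix y assume "(\<integral>\<^sup>+x. g x \<partial>P y) \<noteq> \<infinity>"
    then have "integrable (P y) g"
      by (intro integrableI_nonneg) (auto simp: g0 top.not_eq_extremum)
    then show "(\<integral>\<^sup>+x. g x \<partial>P y) = ennreal (\<integral>x. g x \<partial>P y)"
      by (rule nn_integral_eq_integral) (simp add: g0)
  qed
  have eq2: "(\<integral>\<^sup>+y. ennreal (\<integral>x. g x \<partial>P y) \<partial>L) = (\<integral>\<^sup>+x. g x \<partial>(L \<bind> P))"
    unfolding nnb by (rule nn_integral_cong_AE) (use AEeq in auto)
  show i2: "integrable L (\<lambda>y. \<integral>x. g x \<partial>P y)"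
    by (rule integrableI_nonneg) (use fin eq2 g0 in \<open>auto intro!: integral_nonneg\<close>)
  have "ennreal (\<integral>x. g x \<partial>(L \<bind> P)) = (\<integral>\<^sup>+x. g x \<partial>(L \<bind> P))"
    by (rule nn_integral_eq_integral[OF i1, symmetric]) (simp add: g0)
  also have "\<dots> = ennreal (\<integral>y. (\<integral>x. g x \<partial>P y) \<partial>L)"
    unfolding eq2[symmetric] by (rule nn_integral_eq_integral[OF i2]) (simp add: g0 integral_nonneg)
  finally show "(\<integral>x. g x \<partial>(L \<bind> P)) = (\<integral>y. (\<integral>x. g x \<partial>P y) \<partial>L)"
    by (subst (asm) ennreal_inj) (auto simp: g0 integral_nonneg)
qed


lemma bind_real:
  fixes f :: "'z \<Rightarrow> real"
  assumes L: "sets L = sets borel"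
    and f[measurable]: "f \<in> borel_measurable borel"
    and fin: "(\<integral>\<^sup>+x. ennreal \<bar>f x\<bar> \<partial>(L \<bind> P)) < \<infinity>"
  shows "integrable (L \<bind> P) f" "integrable L (\<lambda>y. \<integral>x. f x \<partial>P y)"
    "(\<integral>x. f x \<partial>(L \<bind> P)) = (\<integral>y. (\<integral>x. f x \<partial>P y) \<partial>L)"
proof -
  have spL: "space L = UNIV" using sets_eq_imp_space_eq[OF L] by simp
  have sLP[measurable_cong]: "sets (L \<bind> P) = sets borel"
    by (rule sets_bind[where N=borel]) (auto simp: spL)
  have mLP: "(L \<bind> P) \<rightarrow>\<^sub>M N = borel \<rightarrow>\<^sub>M N" for N
    by (rule measurable_cong_sets) (auto simp: sLP)
  have mL: "L \<rightarrow>\<^sub>M N = borel \<rightarrow>\<^sub>M N" for N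
    by (rule measurable_cong_sets) (auto simp: L)
  define fp where "fp x = max (f x) 0" for x
  define fn where "fn x = max (- f x) 0" for x
  have mp[measurable]: "fp \<in> borel_measurable borel" and mn[measurable]: "fn \<in> borel_measurable borel"
    unfolding fp_def fn_def by measurable
  have p0: "\<And>x. 0 \<le> fp x" and n0: "\<And>x. 0 \<le> fn x" by (auto simp: fp_def fn_def)
  have finp: "(\<integral>\<^sup>+x. fp x \<partial>(L \<bind> P)) < \<infinity>"
    by (rule le_less_trans[OF nn_integral_mono fin]) (auto simp: fp_def)
  have finn: "(\<integral>\<^sup>+x. fn x \<partial>(L \<bind> P)) < \<infinity>"
    by (rule le_less_trans[OF nn_integral_mono fin]) (auto simp: fn_def)
  note p = bind_nonneg[OF L mp p0 finp]
  note n = bind_nonneg[OF L mn n0 finn]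
  have fpn: "f x = fp x - fn x" for x by (auto simp: fp_def fn_def)
  show "integrable (L \<bind> P) f"
    by (rule integrableI_bounded) (use fin in \<open>auto simp: mLP\<close>)
  have AE1: "AE y in L. (\<integral>x. f x \<partial>P y) = (\<integral>x. fp x \<partial>P y) - (\<integral>x. fn x \<partial>P y)"
    using p(4) n(4) by eventually_elim (simp add: fpn[abs_def] Bochner_Integration.integral_diff)
  show "integrable L (\<lambda>y. \<integral>x. f x \<partial>P y)"
    by (rule integrable_cong_AE_imp[OF Bochner_Integration.integrable_diff[OF p(2) n(2)]]) (use AE1 in \<open>auto simp: mL\<close>)
  have "(\<integral>x. f x \<partial>(L \<bind> P)) = (\<integral>x. fp x \<partial>(L \<bind> P)) - (\<integral>x. fn x \<partial>(L \<bind> P))"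
    by (simp add: fpn[abs_def] Bochner_Integration.integral_diff[OF p(1) n(1)])
  also have "\<dots> = (\<integral>y. (\<integral>x. fp x \<partial>P y) - (\<integral>x. fn x \<partial>P y) \<partial>L)"
    by (simp add: p(3) n(3) Bochner_Integration.integral_diff[OF p(2) n(2)])
  also have "\<dots> = (\<integral>y. (\<integral>x. f x \<partial>P y) \<partial>L)"
    by (rule integral_cong_AE) (use AE1 in \<open>auto simp: mL\<close>)
  finally show "(\<integral>x. f x \<partial>(L \<bind> P)) = (\<integral>y. (\<integral>x. f x \<partial>P y) \<partial>L)" .
qed

end


locale mproc = kern P for P :: "'z::topological_space \<Rightarrow> 'z measure" +
  fixes z :: 'z and M :: "'w measure" and F :: "nat \<Rightarrow> 'w measure" and X :: "nat \<Rightarrow> 'w \<Rightarrow> 'z"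
  assumes mp: "markov_process P z M F X"
begin

lemma prob: "prob_space M" using mp by (simp add: markov_process_def)

sublocale M: prob_space M by (rule prob)

lemma subalg: "subalgebra M (F t)"
  using mp by (auto simp: markov_process_def subalgebra_def)

lemma F_mono: "s \<le> t \<Longrightarrow> sets (F s) \<subseteq> sets (F t)"
  using mp by (auto simp: markov_process_def)

lemma space_F[simp]: "space (F t) = space M"
  using mp by (auto simp: markov_process_def)

lemma X_F: "X t \<in> F t \<rightarrow>\<^sub>M borel"
  using mp by (auto simp: markov_process_def)

lemma X_meas[measurable]: "X t \<in> M \<rightarrow>\<^sub>M borel"
  by (rule measurable_from_subalg[OF subalg X_F])

lemma X0: "AE \<omega> in M. X 0 \<omega> = z"
  using mp by (auto simp: markov_process_def)

lemma FM: "A \<in> sets (F t) \<Longrightarrow> A \<in> sets M"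
  using subalg by (auto simp: subalgebra_def)

lemma markov_eq: "A \<in> sets (F t) \<Longrightarrow> B \<in> sets borel \<Longrightarrow>
   measure M (A \<inter> {\<omega>\<in>space M. X (Suc t) \<omega> \<in> B}) = (\<integral>\<omega>. indicator A \<omega> * measure (P (X t \<omega>)) B \<partial>M)"
  using mp by (auto simp: markov_process_def)

lemma markov_meas:
  assumes A: "A \<in> sets (F t)"
  shows "distr (density M (indicator A)) borel (X (Suc t)) = distr (density M (indicator A)) borel (X t) \<bind> P"
    (is "?L = ?R")
proof (rule measure_eqI)
  have AM[measurable]: "A \<in> sets M" using FM[OF A] .
  have PL: "P \<in> distr (density M (indicator A)) borel (X t) \<rightarrow>\<^sub>M subprob_algebra borel"
    by (subst measurable_cong_sets[of _ borel]) auto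
  show "sets ?L = sets ?R"
    by (subst sets_bind[where N=borel]) auto
  fix B assume "B \<in> sets ?L"
  then have B[measurable]: "B \<in> sets borel" by simp
  have "emeasure ?L B = emeasure (density M (indicator A)) (X (Suc t) -` B \<inter> space M)"
    by (subst emeasure_distr) auto
  also have "\<dots> = (\<integral>\<^sup>+\<omega>. indicator (A \<inter> {\<omega>\<in>space M. X (Suc t) \<omega> \<in> B}) \<omega> \<partial>M)"
    by (subst emeasure_density) (auto intro!: nn_integral_cong simp: indicator_def simp del: nn_integral_indicator)
  also have "\<dots> = emeasure M (A \<inter> {\<omega>\<in>space M. X (Suc t) \<omega> \<in> B})"
    by (rule nn_integral_indicator) measurable
  also have "\<dots> = ennreal (\<integral>\<omega>. indicator A \<omega> * measure (P (X t \<omega>)) B \<partial>M)"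
    by (simp add: M.emeasure_eq_measure markov_eq[OF A B])
  also have "\<dots> = (\<integral>\<^sup>+\<omega>. ennreal (indicator A \<omega> * measure (P (X t \<omega>)) B) \<partial>M)"
  proof (rule nn_integral_eq_integral[symmetric])
    show "integrable M (\<lambda>\<omega>. indicator A \<omega> * measure (P (X t \<omega>)) B)"
      by (rule M.integrable_const_bound[where B=1]) (auto simp: indicator_def intro!: AE_I2 prob_space.prob_le_1[OF prob_P])
  qed auto
  also have "\<dots> = (\<integral>\<^sup>+\<omega>. indicator A \<omega> * emeasure (P (X t \<omega>)) B \<partial>M)"
    by (rule nn_integral_cong) (auto simp: indicator_def emeasure_P)
  also have "\<dots> = (\<integral>\<^sup>+\<omega>. emeasure (P (X t \<omega>)) B \<partial>density M (indicator A))"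
    by (subst nn_integral_density) auto
  also have "\<dots> = (\<integral>\<^sup>+y. emeasure (P y) B \<partial>distr (density M (indicator A)) borel (X t))"
    by (subst nn_integral_distr) auto
  also have "\<dots> = emeasure ?R B"
    by (rule emeasure_bind[symmetric, OF _ PL B]) simp
  finally show "emeasure ?L B = emeasure ?R B" .
qed


lemma density_space: "density M (indicator (space M)) = M"
proof -
  have "density M (indicator (space M)) = density M (\<lambda>_. 1)"
    by (rule density_cong) (auto simp: indicator_def)
  then show ?thesis by (simp add: density_1)
qed

lemma law: "distr M borel (X t) = kpow P t z"
proof (induction t)
  case 0
  show ?case
  proof (rule measure_eqI)
    show "sets (distr M borel (X 0)) = sets (kpow P 0 z)" by simp
    fix B assume "B \<in> sets (distr M borel (X 0))"
    then have B[measurable]: "B \<in> sets borel" by simp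
    have "emeasure (distr M borel (X 0)) B = emeasure M (X 0 -` B \<inter> space M)"
      by (subst emeasure_distr) auto
    also have "\<dots> = emeasure M (if z \<in> B then space M else {})"
      by (rule emeasure_eq_AE) (use X0 in \<open>auto elim!: eventually_mono\<close>)
    also have "\<dots> = emeasure (kpow P 0 z) B"
      by (simp add: M.emeasure_space_1)
    finally show "emeasure (distr M borel (X 0)) B = emeasure (kpow P 0 z) B" .
  qed
next
  case (Suc t)
  have A: "space M \<in> sets (F t)" using space_F[of t] by (metis sets.top)
  show ?case
    using markov_meas[OF A] by (simp add: density_space Suc)
qed

lemma nn_law: "h \<in> borel_measurable borel \<Longrightarrow> (\<integral>\<^sup>+\<omega>. h (X t \<omega>) \<partial>M) = (\<integral>\<^sup>+x. h x \<partial>kpow P t z)"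
  by (subst law[symmetric]) (simp add: nn_integral_distr)

lemma int_law: "h \<in> borel_measurable borel \<Longrightarrow> (\<integral>\<omega>. h (X t \<omega>) \<partial>M) = (\<integral>x. h x \<partial>kpow P t z)"
  for h :: "'z \<Rightarrow> real"
  by (subst law[symmetric]) (simp add: integral_distr)

lemma integrable_law: "h \<in> borel_measurable borel \<Longrightarrow> integrable M (\<lambda>\<omega>. h (X t \<omega>)) \<longleftrightarrow> integrable (kpow P t z) h"
  for h :: "'z \<Rightarrow> real"
  by (subst law[symmetric]) (simp add: integrable_distr_eq)

lemma integrable_X:
  fixes h :: "'z \<Rightarrow> real"
  assumes [measurable]: "h \<in> borel_measurable borel" and fin: "(\<integral>\<^sup>+x. ennreal \<bar>h x\<bar> \<partial>kpow P t z) < \<infinity>"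
  shows "integrable M (\<lambda>\<omega>. h (X t \<omega>))"
  unfolding integrable_law[OF assms(1)] by (rule integrableI_bounded) (use fin in auto)

lemma integrable_X_if:
  fixes h :: "'z \<Rightarrow> real"
  assumes [measurable]: "h \<in> borel_measurable borel" and fin: "(\<integral>\<^sup>+x. ennreal \<bar>h x\<bar> \<partial>kpow P t z) < \<infinity>"
    and Q[measurable]: "Measurable.pred M Q"
  shows "integrable M (\<lambda>\<omega>. if Q \<omega> then h (X t \<omega>) else 0)"
  by (rule Bochner_Integration.integrable_bound[OF integrable_X[OF assms(1,2)]]) auto

lemma markov_int:
  fixes h :: "'z \<Rightarrow> real"
  assumes A: "A \<in> sets (F t)" and h[measurable]: "h \<in> borel_measurable borel"
    and fin: "(\<integral>\<^sup>+x. ennreal \<bar>h x\<bar> \<partial>kpow P (Suc t) z) < \<infinity>"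
  shows "integrable M (\<lambda>\<omega>. indicator A \<omega> * (\<integral>x. h x \<partial>P (X t \<omega>)))"
    "(\<integral>\<omega>. indicator A \<omega> * h (X (Suc t) \<omega>) \<partial>M) = (\<integral>\<omega>. indicator A \<omega> * (\<integral>x. h x \<partial>P (X t \<omega>)) \<partial>M)"
proof -
  have AM[measurable]: "A \<in> sets M" using FM[OF A] .
  let ?N = "density M (indicator A)"
  let ?L = "distr ?N borel (X t)"
  have sL: "sets ?L = sets borel" by simp
  have "(\<integral>\<^sup>+x. ennreal \<bar>h x\<bar> \<partial>(?L \<bind> P)) = (\<integral>\<^sup>+x. ennreal \<bar>h x\<bar> \<partial>distr ?N borel (X (Suc t)))"
    by (simp add: markov_meas[OF A])
  also have "\<dots> = (\<integral>\<^sup>+\<omega>. indicator A \<omega> * ennreal \<bar>h (X (Suc t) \<omega>)\<bar> \<partial>M)"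
    by (simp add: nn_integral_distr nn_integral_density)
  also have "\<dots> \<le> (\<integral>\<^sup>+\<omega>. ennreal \<bar>h (X (Suc t) \<omega>)\<bar> \<partial>M)"
    by (rule nn_integral_mono) (auto simp: indicator_def)
  also have "\<dots> = (\<integral>\<^sup>+x. ennreal \<bar>h x\<bar> \<partial>kpow P (Suc t) z)"
    by (rule nn_law) measurable
  finally have finL: "(\<integral>\<^sup>+x. ennreal \<bar>h x\<bar> \<partial>(?L \<bind> P)) < \<infinity>" using fin by (simp add: le_less_trans)
  note b = bind_real[OF sL h finL]
  have ind: "density M (indicator A) = density M (\<lambda>\<omega>. ennreal (indicator A \<omega>))"
    by (intro arg_cong[where f="density M"]) (auto simp: fun_eq_iff indicator_def)
  have "integrable ?N (\<lambda>\<omega>. (\<integral>x. h x \<partial>P (X t \<omega>)))"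
    using b(2) by (subst (asm) integrable_distr_eq) auto
  then show "integrable M (\<lambda>\<omega>. indicator A \<omega> * (\<integral>x. h x \<partial>P (X t \<omega>)))"
    by (subst (asm) ind, subst (asm) integrable_density) auto
  have "(\<integral>\<omega>. indicator A \<omega> * h (X (Suc t) \<omega>) \<partial>M) = (\<integral>\<omega>. h (X (Suc t) \<omega>) \<partial>?N)"
    by (subst ind, subst integral_density) auto
  also have "\<dots> = (\<integral>x. h x \<partial>distr ?N borel (X (Suc t)))"
    by (simp add: integral_distr)
  also have "\<dots> = (\<integral>y. (\<integral>x. h x \<partial>P y) \<partial>?L)"
    by (simp add: markov_meas[OF A] b(3))
  also have "\<dots> = (\<integral>\<omega>. (\<integral>x. h x \<partial>P (X t \<omega>)) \<partial>?N)"
    by (simp add: integral_distr)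
  also have "\<dots> = (\<integral>\<omega>. indicator A \<omega> * (\<integral>x. h x \<partial>P (X t \<omega>)) \<partial>M)"
    by (subst ind, subst integral_density) auto
  finally show "(\<integral>\<omega>. indicator A \<omega> * h (X (Suc t) \<omega>) \<partial>M) = (\<integral>\<omega>. indicator A \<omega> * (\<integral>x. h x \<partial>P (X t \<omega>)) \<partial>M)" .
qed

end


lemma sum_shift_le1:
  fixes f :: "nat \<Rightarrow> ennreal"
  shows "(\<Sum>t\<in>{1..<n}. f (Suc t)) \<le> (\<Sum>t\<in>{1..<n}. f t) + f n"
proof (cases n)
  case 0 then show ?thesis by simp
next
  case (Suc k)
  have "(\<Sum>t\<in>{1..<n}. f (Suc t)) = (\<Sum>t\<in>{Suc 1..<Suc n}. f t)"
    by (rule sum.shift_bounds_Suc_ivl[symmetric])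
  also have "\<dots> \<le> (\<Sum>t\<in>{1..<Suc n}. f t)"
    by (rule sum_mono2) auto
  also have "\<dots> = (\<Sum>t\<in>{1..<n}. f t) + f n"
    using Suc by simp
  finally show ?thesis .
qed

lemma sum_shift_le2:
  fixes f :: "nat \<Rightarrow> ennreal"
  shows "(\<Sum>t<n. f (Suc t)) \<le> (\<Sum>t<n. f t) + f n"
proof -
  have "(\<Sum>t<n. f (Suc t)) \<le> (\<Sum>t<n. f (Suc t)) + f 0" by simp
  also have "\<dots> = (\<Sum>t<Suc n. f t)" by (simp only: sum.lessThan_Suc_shift add.commute)
  also have "\<dots> = (\<Sum>t<n. f t) + f n" by simp
  finally show ?thesis .
qed

locale setting = kern P for P :: "'z::topological_space \<Rightarrow> 'z measure" +
  fixes r c g :: "'z \<Rightarrow> real" and \<beta> m d m' d' :: real and n :: nat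
  assumes beta: "0 < \<beta>" "\<beta> < 1"
    and r_meas[measurable]: "r \<in> borel_measurable borel" and c_meas[measurable]: "c \<in> borel_measurable borel"
    and g_meas[measurable]: "g \<in> borel_measurable borel" and g_nonneg: "\<And>z. g z \<ge> 0"
    and md: "m \<ge> 0" "d \<ge> 0" "\<beta> * m < 1"
    and A_r: "\<And>z. (\<integral>\<^sup>+ z'. ennreal \<bar>r z'\<bar> \<partial>kpow P n z) \<le> ennreal (g z)"
    and A_c: "\<And>z. (\<integral>\<^sup>+ z'. ennreal \<bar>c z'\<bar> \<partial>kpow P n z) \<le> ennreal (g z)"
    and A_g: "\<And>z. (\<integral>\<^sup>+ z'. ennreal (g z') \<partial>P z) \<le> ennreal (m * g z + d)"
    and fin_r: "\<And>z t. t < n \<Longrightarrow> integrable (kpow P t z) r"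
    and fin_c: "\<And>z t. t < n \<Longrightarrow> integrable (kpow P t z) c"
    and m'd': "m' > 0" "d' > 0" "m + 2 * m' > 1" "\<beta> * (m + 2 * m') < 1"
      "d' \<ge> d / (m + 2 * m' - 1)"
    and feller: "\<And>h :: 'z \<Rightarrow> real. continuous_on UNIV h \<Longrightarrow> bounded (range h) \<Longrightarrow>
        continuous_on UNIV (\<lambda>z. \<integral>z'. h z' \<partial>P z) \<and> bounded (range (\<lambda>z. \<integral>z'. h z' \<partial>P z))"
    and cont_c: "continuous_on UNIV c" and cont_r: "continuous_on UNIV r"
    and cont_Pr: "continuous_on UNIV (\<lambda>z. \<integral>z'. \<bar>r z'\<bar> \<partial>P z)"
    and cont_ell: "continuous_on UNIV (ell P r c g n m' d')"
    and cont_Pell: "continuous_on UNIV (\<lambda>z. \<integral>z'. ell P r c g n m' d' z' \<partial>P z)"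
begin

abbreviation L where "L \<equiv> ell P r c g n m' d'"

definition kap where "kap = m + 2 * m'"

lemma kap: "kap > 1" "\<beta> * kap < 1" "d' * (kap - 1) \<ge> d"
proof -
  show "kap > 1" "\<beta> * kap < 1" using m'd' by (auto simp: kap_def)
  have "d / (kap - 1) * (kap - 1) = d" using \<open>kap > 1\<close> by simp
  then show "d' * (kap - 1) \<ge> d" using m'd'(5) \<open>kap > 1\<close> unfolding kap_def[symmetric]
    by (metis mult_right_mono diff_gt_0_iff_gt less_eq_real_def)
qed

definition Rr where "Rr t y = (\<integral>x. \<bar>r x\<bar> \<partial>kpow P t y)"
definition Rc where "Rc t y = (\<integral>x. \<bar>c x\<bar> \<partial>kpow P t y)"
definition Er where "Er t y = (\<integral>\<^sup>+x. ennreal \<bar>r x\<bar> \<partial>kpow P t y)"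
definition Ec where "Ec t y = (\<integral>\<^sup>+x. ennreal \<bar>c x\<bar> \<partial>kpow P t y)"

lemma Rr_nonneg: "Rr t y \<ge> 0" unfolding Rr_def by (rule Bochner_Integration.integral_nonneg) auto
lemma Rc_nonneg: "Rc t y \<ge> 0" unfolding Rc_def by (rule Bochner_Integration.integral_nonneg) auto

lemma Er_eq: "t < n \<Longrightarrow> Er t y = ennreal (Rr t y)"
  unfolding Er_def Rr_def
  by (rule nn_integral_eq_integral) (auto intro: fin_r)

lemma Ec_eq: "t < n \<Longrightarrow> Ec t y = ennreal (Rc t y)"
  unfolding Ec_def Rc_def
  by (rule nn_integral_eq_integral) (auto intro: fin_c)

lemma Er_meas[measurable]: "(\<lambda>y. Er t y) \<in> borel_measurable borel"
  unfolding Er_def by measurable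

lemma Ec_meas[measurable]: "(\<lambda>y. Ec t y) \<in> borel_measurable borel"
  unfolding Ec_def by measurable

definition Sr where "Sr y = (\<Sum>t\<in>{1..<n}. Rr t y)"
definition Sc where "Sc y = (\<Sum>t<n. Rc t y)"

lemma Sr_nonneg: "Sr y \<ge> 0" unfolding Sr_def by (rule sum_nonneg) (simp add: Rr_nonneg)
lemma Sc_nonneg: "Sc y \<ge> 0" unfolding Sc_def by (rule sum_nonneg) (simp add: Rc_nonneg)

lemma L_eq: "L y = m' * (Sr y + Sc y) + g y + d'"
  by (simp add: ell_def Sr_def Sc_def Rr_def Rc_def)

lemma L_ge: "L y \<ge> g y + d'"
  using m'd'(1) Sr_nonneg[of y] Sc_nonneg[of y] by (simp add: L_eq)

lemma L_pos: "L y > 0"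
  using L_ge[of y] g_nonneg[of y] m'd'(2) by linarith

lemma L_meas[measurable]: "L \<in> borel_measurable borel"
  by (rule borel_measurable_continuous_onI[OF cont_ell])

lemma sumEr: "(\<Sum>t\<in>{1..<n}. Er t y) = ennreal (Sr y)"
  unfolding Sr_def by (subst sum_ennreal[symmetric]) (auto simp: Rr_nonneg Er_eq intro!: sum.cong)

lemma sumEc: "(\<Sum>t<n. Ec t y) = ennreal (Sc y)"
  unfolding Sc_def by (subst sum_ennreal[symmetric]) (auto simp: Rc_nonneg Ec_eq intro!: sum.cong)

lemma L_enn: "ennreal (L y) = ennreal m' * ((\<Sum>t\<in>{1..<n}. Er t y) + (\<Sum>t<n. Ec t y)) + ennreal (g y) + ennreal d'"
  unfolding sumEr sumEc using m'd' Sr_nonneg[of y] Sc_nonneg[of y] g_nonneg[of y]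
  by (simp add: L_eq ennreal_plus[symmetric] ennreal_mult[symmetric] del: ennreal_plus)

lemma PL: "(\<integral>\<^sup>+x. ennreal (L x) \<partial>P y) \<le> ennreal (kap * L y)"
proof -
  have "(\<integral>\<^sup>+x. ennreal (L x) \<partial>P y) =
      (\<integral>\<^sup>+x. ennreal m' * ((\<Sum>t\<in>{1..<n}. Er t x) + (\<Sum>t<n. Ec t x)) + ennreal (g x) + ennreal d' \<partial>P y)"
    by (simp add: L_enn)
  also have "\<dots> = ennreal m' * ((\<Sum>t\<in>{1..<n}. \<integral>\<^sup>+x. Er t x \<partial>P y) + (\<Sum>t<n. \<integral>\<^sup>+x. Ec t x \<partial>P y))
       + (\<integral>\<^sup>+x. ennreal (g x) \<partial>P y) + ennreal d'"
    by (simp add: nn_integral_add nn_integral_cmult nn_integral_sum)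
  also have "\<dots> = ennreal m' * ((\<Sum>t\<in>{1..<n}. Er (Suc t) y) + (\<Sum>t<n. Ec (Suc t) y))
       + (\<integral>\<^sup>+x. ennreal (g x) \<partial>P y) + ennreal d'"
    by (simp add: Er_def Ec_def nn_kpow_Suc' del: kpow.simps)
  also have "\<dots> \<le> ennreal m' * (((\<Sum>t\<in>{1..<n}. Er t y) + Er n y) + ((\<Sum>t<n. Ec t y) + Ec n y))
       + ennreal (m * g y + d) + ennreal d'"
    by (intro add_mono mult_left_mono sum_shift_le1 sum_shift_le2 A_g order_refl) auto
  also have "\<dots> \<le> ennreal m' * ((ennreal (Sr y) + ennreal (g y)) + (ennreal (Sc y) + ennreal (g y)))
       + ennreal (m * g y + d) + ennreal d'"
    unfolding sumEr sumEc Er_def[of n] Ec_def[of n]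
    by (intro add_mono mult_left_mono A_r A_c order_refl) auto
  also have "\<dots> = ennreal (m' * ((Sr y + g y) + (Sc y + g y)) + (m * g y + d) + d')"
    using m'd' md Sr_nonneg[of y] Sc_nonneg[of y] g_nonneg[of y]
    by (simp add: ennreal_plus[symmetric] ennreal_mult[symmetric] del: ennreal_plus)
  also have "\<dots> \<le> ennreal (kap * L y)"
  proof (rule ennreal_leI)
    have "m' * (Sr y + Sc y) \<le> kap * (m' * (Sr y + Sc y))"
      using kap(1) m'd'(1) Sr_nonneg[of y] Sc_nonneg[of y] by (simp add: mult_le_cancel_right1 not_less)
    moreover have "d + d' \<le> kap * d'" using kap(3) by (simp add: algebra_simps)
    ultimately show "m' * ((Sr y + g y) + (Sc y + g y)) + (m * g y + d) + d' \<le> kap * L y"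
      unfolding L_eq kap_def by (simp add: algebra_simps)
  qed
  finally show ?thesis .
qed


definition K where "K = 1 + 1/m' + m + d/d'"

lemma K_ge: "K \<ge> 1" "K * L y \<ge> L y" "K * L y \<ge> L y / m'" "K * L y \<ge> m * L y + d"
proof -
  have p: "1/m' \<ge> 0" "d/d' \<ge> 0" using m'd' md by auto
  show "K \<ge> 1" using p md by (simp add: K_def)
  have Lp: "L y > 0" by (rule L_pos)
  have e: "K * L y = L y + L y / m' + m * L y + d/d' * L y" by (simp add: K_def algebra_simps)
  have f1: "d/d' * L y \<ge> d/d' * d'" using L_ge[of y] g_nonneg[of y] p
    by (intro mult_left_mono) auto
  have f2: "d/d' * d' = d" using m'd' by simp
  have f3: "L y / m' \<ge> 0" "m * L y \<ge> 0" "d/d' * L y \<ge> 0" using Lp m'd' md p by auto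
  show "K * L y \<ge> L y" using e f3 by linarith
  show "K * L y \<ge> L y / m'" using e f3 Lp by linarith
  show "K * L y \<ge> m * L y + d" using e f1 f2 f3 Lp by linarith
qed

lemma K_pos: "K > 0" using K_ge(1) by simp

lemma Rc0: "Rc 0 y = \<bar>c y\<bar>"
  by (simp add: Rc_def integral_return)

lemma Rr0: "Rr 0 y = \<bar>r y\<bar>"
  by (simp add: Rr_def integral_return)

lemma Er0: "Er 0 y = ennreal \<bar>r y\<bar>"
  by (simp add: Er_def nn_integral_return)

lemma Ec0: "Ec 0 y = ennreal \<bar>c y\<bar>"
  by (simp add: Ec_def nn_integral_return)

lemma Lc: "\<bar>c y\<bar> \<le> K * L y"
proof (cases "n = 0")
  case True
  have "ennreal \<bar>c y\<bar> \<le> ennreal (g y)" using A_c[of y] True by (simp add: nn_integral_return)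
  then have "\<bar>c y\<bar> \<le> g y" using g_nonneg[of y] by (simp add: ennreal_le_iff)
  then show ?thesis using L_ge[of y] K_ge(2)[of y] m'd' by linarith
next
  case False
  have "Rc 0 y \<le> Sc y" unfolding Sc_def using False
    by (intro member_le_sum) (auto simp: Rc_nonneg)
  then have "m' * \<bar>c y\<bar> \<le> L y" using m'd'(1) Sr_nonneg[of y] g_nonneg[of y] m'd'(2)
    unfolding L_eq Rc0 by (smt (verit) mult_left_mono distrib_left)
  then have "\<bar>c y\<bar> \<le> L y / m'" using m'd'(1) by (simp add: field_simps)
  then show ?thesis using K_ge(3)[of y] by linarith
qed

lemma LPr: "(\<integral>\<^sup>+x. ennreal \<bar>r x\<bar> \<partial>P y) \<le> ennreal (K * L y)"
proof -
  consider "n = 0" | "n = 1" | "n \<ge> 2" by linarith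
  then show ?thesis
  proof cases
    case 1
    have rg: "ennreal \<bar>r x\<bar> \<le> ennreal (g x)" for x using A_r[of x] 1 by (simp add: nn_integral_return)
    have "(\<integral>\<^sup>+x. ennreal \<bar>r x\<bar> \<partial>P y) \<le> (\<integral>\<^sup>+x. ennreal (g x) \<partial>P y)"
      by (rule nn_integral_mono) (rule rg)
    also have "\<dots> \<le> ennreal (m * g y + d)" by (rule A_g)
    also have "\<dots> \<le> ennreal (K * L y)"
      using K_ge(4)[of y] L_ge[of y] md m'd' mult_left_mono[of "g y" "L y" m]
      by (intro ennreal_leI) linarith
    finally show ?thesis .
  next
    case 2
    have "(\<integral>\<^sup>+x. ennreal \<bar>r x\<bar> \<partial>P y) = Er 1 y" by (simp add: Er_def del: kpow.simps add: kpow_1)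
    also have "\<dots> \<le> ennreal (g y)" using A_r[of y] 2 by (simp add: Er_def)
    also have "\<dots> \<le> ennreal (K * L y)"
      using K_ge(2)[of y] L_ge[of y] m'd' by (intro ennreal_leI) linarith
    finally show ?thesis .
  next
    case 3
    have "(\<integral>\<^sup>+x. ennreal \<bar>r x\<bar> \<partial>P y) = Er 1 y" by (simp add: Er_def del: kpow.simps add: kpow_1)
    also have "\<dots> = ennreal (Rr 1 y)" using 3 by (simp add: Er_eq)
    also have "\<dots> \<le> ennreal (K * L y)"
    proof (rule ennreal_leI)
      have "Rr 1 y \<le> Sr y" unfolding Sr_def using 3
        by (intro member_le_sum) (auto simp: Rr_nonneg)
      then have "m' * Rr 1 y \<le> L y" using m'd'(1) Sc_nonneg[of y] g_nonneg[of y] m'd'(2)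
        unfolding L_eq by (smt (verit) mult_left_mono distrib_left)
      then have "Rr 1 y \<le> L y / m'" using m'd'(1) by (simp add: field_simps)
      then show "Rr 1 y \<le> K * L y" using K_ge(3)[of y] by linarith
    qed
    finally show ?thesis .
  qed
qed

lemma EL: "(\<integral>\<^sup>+x. ennreal (L x) \<partial>kpow P t y) \<le> ennreal (kap ^ t * L y)"
proof (induction t arbitrary: y)
  case 0
  then show ?case by (simp add: nn_integral_return)
next
  case (Suc t)
  have "(\<integral>\<^sup>+x. ennreal (L x) \<partial>kpow P (Suc t) y) = (\<integral>\<^sup>+x. (\<integral>\<^sup>+u. ennreal (L u) \<partial>P x) \<partial>kpow P t y)"
    by (rule nn_kpow_Suc) measurable
  also have "\<dots> \<le> (\<integral>\<^sup>+x. ennreal kap * ennreal (L x) \<partial>kpow P t y)"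
  proof (rule nn_integral_mono)
    fix x
    have "ennreal (kap * L x) = ennreal kap * ennreal (L x)" by (rule ennreal_mult') (use kap(1) in linarith)
    then show "(\<integral>\<^sup>+u. ennreal (L u) \<partial>P x) \<le> ennreal kap * ennreal (L x)" using PL[of x] by simp
  qed
  also have "\<dots> = ennreal kap * (\<integral>\<^sup>+x. ennreal (L x) \<partial>kpow P t y)"
    by (rule nn_integral_cmult) measurable
  also have "\<dots> \<le> ennreal kap * ennreal (kap ^ t * L y)"
    by (intro mult_left_mono Suc.IH) auto
  also have "\<dots> = ennreal (kap ^ Suc t * L y)"
    using kap(1) L_pos[of y] by (simp add: ennreal_mult[symmetric])
  finally show ?case .
qed

lemma nn_bound_L:
  assumes [measurable]: "h \<in> borel_measurable borel" and hb: "\<And>x. h x \<le> ennreal (a * L x)" and a: "a \<ge> 0"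
  shows "(\<integral>\<^sup>+x. h x \<partial>kpow P t y) \<le> ennreal (a * kap ^ t * L y)"
proof -
  have "(\<integral>\<^sup>+x. h x \<partial>kpow P t y) \<le> (\<integral>\<^sup>+x. ennreal a * ennreal (L x) \<partial>kpow P t y)"
  proof (rule nn_integral_mono)
    fix x
    have "ennreal (a * L x) = ennreal a * ennreal (L x)" by (rule ennreal_mult') (use a in linarith)
    then show "h x \<le> ennreal a * ennreal (L x)" using hb[of x] by simp
  qed
  also have "\<dots> = ennreal a * (\<integral>\<^sup>+x. ennreal (L x) \<partial>kpow P t y)"
    by (rule nn_integral_cmult) measurable
  also have "\<dots> \<le> ennreal a * ennreal (kap ^ t * L y)"
    by (intro mult_left_mono EL) auto
  also have "\<dots> = ennreal (a * kap ^ t * L y)"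
    using a kap(1) L_pos[of y] by (simp add: ennreal_mult[symmetric] mult.assoc)
  finally show ?thesis .
qed

lemma Ec_bound: "Ec t y \<le> ennreal (K * kap ^ t * L y)"
  unfolding Ec_def by (rule nn_bound_L) (use Lc K_pos in \<open>auto intro: ennreal_leI\<close>)

lemma Er_bound: "Er t y \<le> ennreal (\<bar>r y\<bar> + K * kap ^ t * L y)"
proof (cases t)
  case 0
  then show ?thesis using K_pos L_pos[of y] by (simp add: Er0 ennreal_leI)
next
  case (Suc s)
  have "Er t y = (\<integral>\<^sup>+x. (\<integral>\<^sup>+u. ennreal \<bar>r u\<bar> \<partial>P x) \<partial>kpow P s y)"
    unfolding Er_def Suc by (rule nn_kpow_Suc) measurable
  also have "\<dots> \<le> ennreal (K * kap ^ s * L y)"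
    by (rule nn_bound_L) (use LPr K_pos in auto)
  also have "\<dots> \<le> ennreal (\<bar>r y\<bar> + K * kap ^ t * L y)"
  proof (rule ennreal_leI)
    have "kap ^ s \<le> kap ^ t" using kap(1) Suc by (intro power_increasing) auto
    then have "K * kap ^ s * L y \<le> K * kap ^ t * L y"
      using K_pos L_pos[of y] by (intro mult_right_mono mult_left_mono) auto
    then show "K * kap ^ s * L y \<le> \<bar>r y\<bar> + K * kap ^ t * L y" by linarith
  qed
  finally show ?thesis .
qed

end


lemma weighted_limit_cont:
  fixes f :: "'a::topological_space \<Rightarrow> real"
  assumes fk: "\<And>k. continuous_on UNIV (fs k)" and w: "continuous_on UNIV w"
    and b: "\<And>k x. \<bar>fs k x - f x\<bar> \<le> a k * w x" and a: "a \<longlonglongrightarrow> 0" and a0: "\<And>k. a k \<ge> 0"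
    and w0: "\<And>x. w x \<ge> 0"
  shows "continuous_on UNIV f"
  unfolding continuous_on_def
proof (intro ballI tendstoI)
  fix x0 :: 'a and e :: real assume e: "e > 0"
  have "(\<lambda>k. a k * (w x0 + 1)) \<longlonglongrightarrow> 0 * (w x0 + 1)"
    by (intro tendsto_mult a tendsto_const)
  then have "\<forall>\<^sub>F k in sequentially. a k * (w x0 + 1) < e / 3"
    using e by (auto dest!: order_tendstoD(2)[where a="e/3"])
  then obtain k where k: "a k * (w x0 + 1) < e / 3" by (auto simp: eventually_sequentially)
  have c1: "((fs k) \<longlongrightarrow> fs k x0) (at x0 within UNIV)" using fk[of k] by (simp add: continuous_on_def)
  have c2: "(w \<longlongrightarrow> w x0) (at x0 within UNIV)" using w by (simp add: continuous_on_def)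
  have ev1: "\<forall>\<^sub>F x in at x0 within UNIV. dist (fs k x) (fs k x0) < e / 3"
    using tendstoD[OF c1, of "e/3"] e by simp
  have ev2: "\<forall>\<^sub>F x in at x0 within UNIV. w x < w x0 + 1"
    using c2 by (auto dest: order_tendstoD(2)[where a="w x0 + 1"])
  show "\<forall>\<^sub>F x in at x0 within UNIV. dist (f x) (f x0) < e"
    using ev1 ev2
  proof eventually_elim
    case (elim x)
    have "a k * w x \<le> a k * (w x0 + 1)" using elim(2) a0[of k] by (intro mult_left_mono) auto
    moreover have "a k * w x0 \<le> a k * (w x0 + 1)" using a0[of k] by (intro mult_left_mono) auto
    moreover have "\<bar>f x - f x0\<bar> \<le> \<bar>fs k x - f x\<bar> + \<bar>fs k x - fs k x0\<bar> + \<bar>fs k x0 - f x0\<bar>" by linarith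
    ultimately show ?case using b[of k x] b[of k x0] elim(1) k by (simp add: dist_real_def)
  qed
qed

context setting
begin

lemma lsc_int:
  fixes u :: "'z \<Rightarrow> real"
  assumes uc: "continuous_on UNIV u" and u0: "\<And>x. u x \<ge> 0" and ui: "\<And>z. integrable (P z) u"
    and l: "l < (\<integral>x. u x \<partial>P z0)"
  shows "\<forall>\<^sub>F z in at z0 within UNIV. l < (\<integral>x. u x \<partial>P z)"
proof -
  have um[measurable]: "u \<in> borel_measurable borel" by (rule borel_measurable_continuous_onI[OF uc])
  define uk where "uk k x = min (u x) (real k)" for k x
  have ukm[measurable]: "uk k \<in> borel_measurable borel" for k unfolding uk_def by measurable
  have ukc: "continuous_on UNIV (uk k)" for k unfolding uk_def
    by (intro continuous_on_min uc continuous_on_const)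
  have ukb: "bounded (range (uk k))" for k
    unfolding bounded_real using u0 by (intro exI[of _ "real k"]) (auto simp: uk_def)
  have uki: "integrable (P z) (uk k)" for z k
    by (rule Bochner_Integration.integrable_bound[OF ui[of z]]) (auto simp: uk_def u0)
  have "(\<lambda>k. \<integral>x. uk k x \<partial>P z0) \<longlonglongrightarrow> (\<integral>x. u x \<partial>P z0)"
  proof (rule integral_dominated_convergence[where w=u])
    show "integrable (P z0) u" by (rule ui)
    show "AE x in P z0. (\<lambda>k. uk k x) \<longlonglongrightarrow> u x"
    proof (intro AE_I2)
      fix x
      have "\<forall>\<^sub>F k in sequentially. uk k x = u x"
        using eventually_ge_at_top[of "nat \<lceil>u x\<rceil>"]
      proof eventually_elim
        case (elim k)
        have "u x \<le> real k" using real_nat_ceiling_ge[of "u x"] elim by (meson of_nat_le_iff order_trans)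
        then show ?case by (simp add: uk_def)
      qed
      then show "(\<lambda>k. uk k x) \<longlonglongrightarrow> u x" by (rule tendsto_eventually)
    qed
    show "\<And>k. AE x in P z0. norm (uk k x) \<le> u x" using u0 by (auto simp: uk_def)
  qed auto
  then obtain k where k: "l < (\<integral>x. uk k x \<partial>P z0)"
    using l by (auto dest!: order_tendstoD(1)[where a=l] simp: eventually_sequentially) blast
  have "continuous_on UNIV (\<lambda>z. \<integral>x. uk k x \<partial>P z)" using feller[OF ukc ukb] by simp
  then have "((\<lambda>z. \<integral>x. uk k x \<partial>P z) \<longlongrightarrow> (\<integral>x. uk k x \<partial>P z0)) (at z0 within UNIV)"
    by (simp add: continuous_on_def)
  then have "\<forall>\<^sub>F z in at z0 within UNIV. l < (\<integral>x. uk k x \<partial>P z)"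
    using k by (rule order_tendstoD(1))
  then show ?thesis
  proof eventually_elim
    case (elim z)
    have "(\<integral>x. uk k x \<partial>P z) \<le> (\<integral>x. u x \<partial>P z)"
      by (rule integral_mono[OF uki ui]) (simp add: uk_def)
    then show ?case using elim by linarith
  qed
qed

lemma gen_feller:
  fixes h Lf :: "'z \<Rightarrow> real"
  assumes hc: "continuous_on UNIV h" and Lc: "continuous_on UNIV Lf"
    and hb: "\<And>x. \<bar>h x\<bar> \<le> Lf x" and Li: "\<And>z. integrable (P z) Lf"
    and PLc: "continuous_on UNIV (\<lambda>z. \<integral>x. Lf x \<partial>P z)"
  shows "continuous_on UNIV (\<lambda>z. \<integral>x. h x \<partial>P z)"
  unfolding continuous_on_def
proof (intro ballI)
  fix z0 :: 'z
  have hm[measurable]: "h \<in> borel_measurable borel" by (rule borel_measurable_continuous_onI[OF hc])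
  have Lm[measurable]: "Lf \<in> borel_measurable borel" by (rule borel_measurable_continuous_onI[OF Lc])
  have hi: "integrable (P z) h" for z
    by (rule Bochner_Integration.integrable_bound[OF Li[of z]]) (auto intro!: AE_I2 order_trans[OF hb abs_ge_self])
  have ip: "integrable (P z) (\<lambda>x. Lf x + h x)" for z by (intro Bochner_Integration.integrable_add Li hi)
  have im: "integrable (P z) (\<lambda>x. Lf x - h x)" for z by (intro Bochner_Integration.integrable_diff Li hi)
  have eqp: "(\<integral>x. Lf x + h x \<partial>P z) = (\<integral>x. Lf x \<partial>P z) + (\<integral>x. h x \<partial>P z)" for z
    by (rule Bochner_Integration.integral_add[OF Li hi])
  have eqm: "(\<integral>x. Lf x - h x \<partial>P z) = (\<integral>x. Lf x \<partial>P z) - (\<integral>x. h x \<partial>P z)" for z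
    by (rule Bochner_Integration.integral_diff[OF Li hi])
  have p0: "0 \<le> Lf x + h x" and m0: "0 \<le> Lf x - h x" for x using hb[of x] by (auto simp: abs_le_iff)
  have cp: "continuous_on UNIV (\<lambda>x. Lf x + h x)" by (intro continuous_on_add Lc hc)
  have cm: "continuous_on UNIV (\<lambda>x. Lf x - h x)" by (intro continuous_on_diff Lc hc)
  have Lt: "((\<lambda>z. \<integral>x. Lf x \<partial>P z) \<longlongrightarrow> (\<integral>x. Lf x \<partial>P z0)) (at z0 within UNIV)"
    using PLc by (simp add: continuous_on_def)
  show "((\<lambda>z. \<integral>x. h x \<partial>P z) \<longlongrightarrow> (\<integral>x. h x \<partial>P z0)) (at z0 within UNIV)"
  proof (rule order_tendstoI)
    fix l assume l: "l < (\<integral>x. h x \<partial>P z0)"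
    define e where "e = ((\<integral>x. h x \<partial>P z0) - l) / 2"
    have e: "e > 0" using l by (simp add: e_def)
    have ev1: "\<forall>\<^sub>F z in at z0 within UNIV. (\<integral>x. Lf x + h x \<partial>P z0) - e < (\<integral>x. Lf x + h x \<partial>P z)"
      by (rule lsc_int[OF cp _ ip]) (use p0 m0 e in auto)
    have ev2: "\<forall>\<^sub>F z in at z0 within UNIV. (\<integral>x. Lf x \<partial>P z) < (\<integral>x. Lf x \<partial>P z0) + e"
      using Lt e by (auto dest: order_tendstoD(2)[where a="(\<integral>x. Lf x \<partial>P z0) + e"])
    show "\<forall>\<^sub>F z in at z0 within UNIV. l < (\<integral>x. h x \<partial>P z)"
      using ev1 ev2
    proof eventually_elim
      case (elim z)
      note el = elim[unfolded eqp e_def]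
      show ?case using el by (simp add: field_simps)
    qed
  next
    fix u assume u: "u > (\<integral>x. h x \<partial>P z0)"
    define e where "e = (u - (\<integral>x. h x \<partial>P z0)) / 2"
    have e: "e > 0" using u by (simp add: e_def)
    have ev1: "\<forall>\<^sub>F z in at z0 within UNIV. (\<integral>x. Lf x - h x \<partial>P z0) - e < (\<integral>x. Lf x - h x \<partial>P z)"
      by (rule lsc_int[OF cm _ im]) (use p0 m0 e in auto)
    have ev2: "\<forall>\<^sub>F z in at z0 within UNIV. (\<integral>x. Lf x \<partial>P z) < (\<integral>x. Lf x \<partial>P z0) + e"
      using Lt e by (auto dest: order_tendstoD(2)[where a="(\<integral>x. Lf x \<partial>P z0) + e"])
    show "\<forall>\<^sub>F z in at z0 within UNIV. (\<integral>x. h x \<partial>P z) < u"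
      using ev1 ev2
    proof eventually_elim
      case (elim z)
      note el = elim[unfolded eqm e_def]
      show ?case using el by (simp add: field_simps)
    qed
  qed
qed

end


lemma geom_tail:
  fixes s :: "nat \<Rightarrow> real"
  assumes d: "\<And>k. \<bar>s (Suc k) - s k\<bar> \<le> B * q ^ k" and q: "0 \<le> q" "q < 1"
  shows "s \<longlonglongrightarrow> lim s" "\<And>k. \<bar>lim s - s k\<bar> \<le> B * q ^ k / (1 - q)"
proof -
  define D where "D j = s (Suc j) - s j" for j
  have sg: "summable (\<lambda>j. B * q ^ j)" using q by (intro summable_mult summable_geometric) auto
  have sD: "summable D"
    by (rule summable_comparison_test[OF _ sg]) (use d in \<open>auto simp: D_def\<close>)
  have seq: "s n = s 0 + (\<Sum>j<n. D j)" for n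
    by (simp add: D_def sum_lessThan_telescope)
  have "(\<lambda>n. s 0 + (\<Sum>j<n. D j)) \<longlonglongrightarrow> s 0 + suminf D"
    by (intro tendsto_add tendsto_const summable_LIMSEQ sD)
  then have conv: "s \<longlonglongrightarrow> s 0 + suminf D" by (simp add: seq[symmetric])
  then have lims: "lim s = s 0 + suminf D" by (rule limI)
  show "s \<longlonglongrightarrow> lim s" using conv lims by simp
  fix k
  have "lim s - s k = suminf D - (\<Sum>j<k. D j)" by (simp add: lims seq[of k])
  also have "\<dots> = (\<Sum>n. D (n + k))" using suminf_split_initial_segment[OF sD, of k] by simp
  finally have e: "lim s - s k = (\<Sum>n. D (n + k))" .
  have sg2: "summable (\<lambda>n. B * q ^ k * q ^ n)" using q by (intro summable_mult summable_geometric) auto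
  have "\<bar>\<Sum>n. D (n + k)\<bar> \<le> (\<Sum>n. B * q ^ k * q ^ n)"
  proof (rule norm_suminf_le[of "\<lambda>n. D (n + k)" "\<lambda>n. B * q ^ k * q ^ n", OF _ sg2, simplified])
    fix n
    show "\<bar>D (n + k)\<bar> \<le> B * q ^ k * q ^ n" using d[of "n + k"] by (simp add: D_def power_add mult_ac)
  qed
  also have "\<dots> = B * q ^ k / (1 - q)"
    using q by (simp add: suminf_mult suminf_geometric divide_simps)
  finally show "\<bar>lim s - s k\<bar> \<le> B * q ^ k / (1 - q)" using e by simp
qed

context setting
begin

definition C where "C = 2 * K / (1 - \<beta> * kap)"

lemma C_pos: "C > 0" using K_pos kap by (simp add: C_def)

lemma C_eq: "K + \<beta> * K + \<beta> * kap * C \<le> C"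
proof -
  have "C * (1 - \<beta> * kap) = 2 * K" using kap by (simp add: C_def)
  then have "C = 2 * K + \<beta> * kap * C" by (simp add: algebra_simps)
  moreover have "\<beta> * K \<le> K" using beta K_pos by simp
  ultimately show ?thesis by linarith
qed

lemma int_r_P: "integrable (P z) r" "(\<integral>x. \<bar>r x\<bar> \<partial>P z) \<le> K * L z"
proof -
  have fin: "(\<integral>\<^sup>+x. ennreal \<bar>r x\<bar> \<partial>P z) < \<infinity>" using LPr[of z] by (simp add: le_less_trans)
  show ir: "integrable (P z) r" by (rule integrableI_bounded) (use fin in auto)
  have "ennreal (\<integral>x. \<bar>r x\<bar> \<partial>P z) = (\<integral>\<^sup>+x. ennreal \<bar>r x\<bar> \<partial>P z)"
    by (rule nn_integral_eq_integral[symmetric]) (use ir in auto)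
  then have "ennreal (\<integral>x. \<bar>r x\<bar> \<partial>P z) \<le> ennreal (K * L z)" using LPr[of z] by simp
  then show "(\<integral>x. \<bar>r x\<bar> \<partial>P z) \<le> K * L z"
    using K_pos L_pos[of z] by (simp add: ennreal_le_iff)
qed

lemma int_L_P: "integrable (P z) L" "(\<integral>x. L x \<partial>P z) \<le> kap * L z"
proof -
  have fin: "(\<integral>\<^sup>+x. ennreal (L x) \<partial>P z) < \<infinity>" using PL[of z] by (simp add: le_less_trans)
  show iL: "integrable (P z) L" by (rule integrableI_nonneg) (use fin L_pos in \<open>auto intro: less_imp_le\<close>)
  have "ennreal (\<integral>x. L x \<partial>P z) = (\<integral>\<^sup>+x. ennreal (L x) \<partial>P z)"
    by (rule nn_integral_eq_integral[symmetric]) (use iL L_pos in \<open>auto intro: less_imp_le\<close>)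
  then have "ennreal (\<integral>x. L x \<partial>P z) \<le> ennreal (kap * L z)" using PL[of z] by simp
  then show "(\<integral>x. L x \<partial>P z) \<le> kap * L z"
    using kap L_pos[of z] by (simp add: ennreal_le_iff)
qed

definition Q where "Q \<phi> z = c z + \<beta> * (\<integral>x. max (r x) (\<phi> x) \<partial>P z)"

lemma Q_int:
  assumes pc: "continuous_on UNIV \<phi>" and pb: "\<And>x. \<bar>\<phi> x\<bar> \<le> a * L x"
  shows "integrable (P z) (\<lambda>x. max (r x) (\<phi> x))"
proof -
  have [measurable]: "\<phi> \<in> borel_measurable borel" by (rule borel_measurable_continuous_onI[OF pc])
  have i: "integrable (P z) (\<lambda>x. \<bar>r x\<bar> + a * L x)"
    by (intro Bochner_Integration.integrable_add integrable_abs int_r_P Bochner_Integration.integrable_mult_right int_L_P)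
  show ?thesis
  proof (rule Bochner_Integration.integrable_bound[OF i])
    show "AE x in P z. norm (max (r x) (\<phi> x)) \<le> norm (\<bar>r x\<bar> + a * L x)"
    proof (rule AE_I2)
      fix x
      show "norm (max (r x) (\<phi> x)) \<le> norm (\<bar>r x\<bar> + a * L x)" using pb[of x] by simp
    qed
  qed measurable
qed


lemma max_bound: "\<bar>p::real\<bar> \<le> b \<Longrightarrow> \<bar>max y p\<bar> \<le> \<bar>y\<bar> + b" by linarith
lemma max_lip: "\<bar>max (y::real) u - max y v\<bar> \<le> \<bar>u - v\<bar>" by linarith

lemma Q_cont:
  assumes pc: "continuous_on UNIV \<phi>" and pb: "\<And>x. \<bar>\<phi> x\<bar> \<le> a * L x" and a: "a \<ge> 0"
  shows "continuous_on UNIV (Q \<phi>)"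
proof -
  have [measurable]: "\<phi> \<in> borel_measurable borel" by (rule borel_measurable_continuous_onI[OF pc])
  have Li: "integrable (P z) (\<lambda>x. \<bar>r x\<bar> + a * L x)" for z
    by (intro Bochner_Integration.integrable_add integrable_abs int_r_P Bochner_Integration.integrable_mult_right int_L_P)
  have eq: "(\<integral>x. \<bar>r x\<bar> + a * L x \<partial>P z) = (\<integral>x. \<bar>r x\<bar> \<partial>P z) + a * (\<integral>x. L x \<partial>P z)" for z
    by (simp add: Bochner_Integration.integral_add integrable_abs int_r_P int_L_P)
  have PLc: "continuous_on UNIV (\<lambda>z. \<integral>x. \<bar>r x\<bar> + a * L x \<partial>P z)"
    unfolding eq by (intro continuous_on_add cont_Pr continuous_on_mult continuous_on_const cont_Pell)
  have "continuous_on UNIV (\<lambda>z. \<integral>x. max (r x) (\<phi> x) \<partial>P z)"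
  proof (rule gen_feller[OF _ _ _ Li PLc])
    show "continuous_on UNIV (\<lambda>x. max (r x) (\<phi> x))" by (intro continuous_on_max cont_r pc)
    show "continuous_on UNIV (\<lambda>x. \<bar>r x\<bar> + a * L x)"
      by (intro continuous_on_add continuous_on_rabs cont_r continuous_on_mult continuous_on_const cont_ell)
    show "\<bar>max (r x) (\<phi> x)\<bar> \<le> \<bar>r x\<bar> + a * L x" for x by (rule max_bound[OF pb])
  qed
  then show ?thesis unfolding Q_def[abs_def]
    by (intro continuous_on_add cont_c continuous_on_mult continuous_on_const)
qed

lemma Q_bound:
  assumes pc: "continuous_on UNIV \<phi>" and pb: "\<And>x. \<bar>\<phi> x\<bar> \<le> a * L x" and a: "a \<ge> 0"
  shows "\<bar>Q \<phi> z\<bar> \<le> K * L z + \<beta> * (K * L z + a * kap * L z)"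
proof -
  have [measurable]: "\<phi> \<in> borel_measurable borel" by (rule borel_measurable_continuous_onI[OF pc])
  have Li: "integrable (P z) (\<lambda>x. \<bar>r x\<bar> + a * L x)"
    by (intro Bochner_Integration.integrable_add integrable_abs int_r_P Bochner_Integration.integrable_mult_right int_L_P)
  have "\<bar>\<integral>x. max (r x) (\<phi> x) \<partial>P z\<bar> \<le> (\<integral>x. \<bar>max (r x) (\<phi> x)\<bar> \<partial>P z)"
    using integral_norm_bound[of "P z" "\<lambda>x. max (r x) (\<phi> x)"] by simp
  also have "\<dots> \<le> (\<integral>x. \<bar>r x\<bar> + a * L x \<partial>P z)"
    by (rule integral_mono[OF integrable_abs[OF Q_int[OF pc pb]] Li]) (rule max_bound[OF pb])
  also have "\<dots> = (\<integral>x. \<bar>r x\<bar> \<partial>P z) + a * (\<integral>x. L x \<partial>P z)"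
    by (simp add: Bochner_Integration.integral_add integrable_abs int_r_P int_L_P)
  also have "\<dots> \<le> K * L z + a * (kap * L z)"
    using int_r_P(2)[of z] int_L_P(2)[of z] a by (intro add_mono mult_left_mono) auto
  finally have i: "\<bar>\<integral>x. max (r x) (\<phi> x) \<partial>P z\<bar> \<le> K * L z + a * kap * L z" by (simp add: mult_ac)
  have "\<bar>Q \<phi> z\<bar> \<le> \<bar>c z\<bar> + \<beta> * \<bar>\<integral>x. max (r x) (\<phi> x) \<partial>P z\<bar>"
    unfolding Q_def using abs_triangle_ineq[of "c z" "\<beta> * (\<integral>x. max (r x) (\<phi> x) \<partial>P z)"] beta by (simp add: abs_mult)
  also have "\<dots> \<le> K * L z + \<beta> * (K * L z + a * kap * L z)"
    using Lc[of z] i beta by (intro add_mono mult_left_mono) auto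
  finally show ?thesis .
qed

lemma Q_contr:
  assumes p1: "continuous_on UNIV \<phi>1" "\<And>x. \<bar>\<phi>1 x\<bar> \<le> aa * L x"
    and p2: "continuous_on UNIV \<phi>2" "\<And>x. \<bar>\<phi>2 x\<bar> \<le> ab * L x"
    and d: "\<And>x. \<bar>\<phi>1 x - \<phi>2 x\<bar> \<le> b * L x" and b: "b \<ge> 0"
  shows "\<bar>Q \<phi>1 z - Q \<phi>2 z\<bar> \<le> \<beta> * b * kap * L z"
proof -
  have [measurable]: "\<phi>1 \<in> borel_measurable borel" "\<phi>2 \<in> borel_measurable borel"
    by (rule borel_measurable_continuous_onI, fact)+
  note i1 = Q_int[OF p1] and i2 = Q_int[OF p2]
  have "\<bar>(\<integral>x. max (r x) (\<phi>1 x) \<partial>P z) - (\<integral>x. max (r x) (\<phi>2 x) \<partial>P z)\<bar>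
      = \<bar>\<integral>x. max (r x) (\<phi>1 x) - max (r x) (\<phi>2 x) \<partial>P z\<bar>"
    by (simp add: Bochner_Integration.integral_diff[OF i1 i2])
  also have "\<dots> \<le> (\<integral>x. \<bar>max (r x) (\<phi>1 x) - max (r x) (\<phi>2 x)\<bar> \<partial>P z)"
    using integral_norm_bound[of "P z" "\<lambda>x. max (r x) (\<phi>1 x) - max (r x) (\<phi>2 x)"] by simp
  also have "\<dots> \<le> (\<integral>x. b * L x \<partial>P z)"
    by (rule integral_mono[OF integrable_abs[OF Bochner_Integration.integrable_diff[OF i1 i2]]])
      (auto intro: order_trans[OF max_lip d] Bochner_Integration.integrable_mult_right int_L_P)
  also have "\<dots> = b * (\<integral>x. L x \<partial>P z)" by simp
  also have "\<dots> \<le> b * (kap * L z)" using int_L_P(2)[of z] b by (intro mult_left_mono) auto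
  finally have "\<bar>(\<integral>x. max (r x) (\<phi>1 x) \<partial>P z) - (\<integral>x. max (r x) (\<phi>2 x) \<partial>P z)\<bar> \<le> b * (kap * L z)" .
  then have "\<beta> * \<bar>(\<integral>x. max (r x) (\<phi>1 x) \<partial>P z) - (\<integral>x. max (r x) (\<phi>2 x) \<partial>P z)\<bar> \<le> \<beta> * (b * (kap * L z))"
    using beta by (intro mult_left_mono) auto
  moreover have "\<bar>Q \<phi>1 z - Q \<phi>2 z\<bar> = \<beta> * \<bar>(\<integral>x. max (r x) (\<phi>1 x) \<partial>P z) - (\<integral>x. max (r x) (\<phi>2 x) \<partial>P z)\<bar>"
    unfolding Q_def using beta by (simp add: abs_mult right_diff_distrib[symmetric])
  ultimately show ?thesis by (simp add: mult_ac)
qed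

definition psi where "psi k = (Q ^^ k) (\<lambda>_. 0)"

lemma psi_Suc: "psi (Suc k) = Q (psi k)" by (simp add: psi_def)

lemma psi_props: "continuous_on UNIV (psi k) \<and> (\<forall>x. \<bar>psi k x\<bar> \<le> C * L x)"
proof (induction k)
  case 0
  then show ?case using C_pos L_pos by (simp add: psi_def less_imp_le)
next
  case (Suc k)
  then have pc: "continuous_on UNIV (psi k)" and pb: "\<And>x. \<bar>psi k x\<bar> \<le> C * L x" by auto
  have "\<bar>Q (psi k) x\<bar> \<le> C * L x" for x
  proof -
    have "\<bar>Q (psi k) x\<bar> \<le> K * L x + \<beta> * (K * L x + C * kap * L x)"
      by (rule Q_bound[OF pc pb]) (use C_pos in simp)
    also have "\<dots> = (K + \<beta> * K + \<beta> * kap * C) * L x" by (simp add: algebra_simps)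
    also have "\<dots> \<le> C * L x" using C_eq L_pos[of x] by (intro mult_right_mono) auto
    finally show ?thesis .
  qed
  then show ?case using Q_cont[OF pc pb] C_pos by (simp add: psi_Suc)
qed

definition qq where "qq = \<beta> * kap"

lemma qq: "0 \<le> qq" "qq < 1" using beta kap by (auto simp: qq_def)

lemma psi_diff: "\<bar>psi (Suc k) x - psi k x\<bar> \<le> C * qq ^ k * L x"
proof (induction k arbitrary: x)
  case 0
  then show ?case using psi_props[of 1] by (simp add: psi_def)
next
  case (Suc k)
  have "\<bar>Q (psi (Suc k)) x - Q (psi k) x\<bar> \<le> \<beta> * (C * qq ^ k) * kap * L x"
    by (rule Q_contr[where aa=C and ab=C]) (use psi_props Suc.IH C_pos qq in \<open>auto\<close>)
  then show ?case by (simp add: psi_Suc qq_def mult_ac)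
qed

definition psil where "psil x = lim (\<lambda>k. psi k x)"

definition ak where "ak k = C * qq ^ k / (1 - qq)"

lemma ak_nonneg: "ak k \<ge> 0" using C_pos qq by (simp add: ak_def)

lemma ak_lim: "ak \<longlonglongrightarrow> 0"
proof -
  have "(\<lambda>k. C * qq ^ k / (1 - qq)) \<longlonglongrightarrow> C * 0 / (1 - qq)"
    by (intro tendsto_divide tendsto_mult tendsto_const LIMSEQ_power_zero) (use qq in auto)
  then show ?thesis by (simp add: ak_def[abs_def])
qed

lemma psil_conv: "(\<lambda>k. psi k x) \<longlonglongrightarrow> psil x" and psil_err: "\<bar>psil x - psi k x\<bar> \<le> ak k * L x"
proof -
  have d: "\<bar>psi (Suc k) x - psi k x\<bar> \<le> (C * L x) * qq ^ k" for k using psi_diff[of k x] by (simp add: mult_ac)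
  note gt = geom_tail[of "\<lambda>k. psi k x", OF d qq]
  show "(\<lambda>k. psi k x) \<longlonglongrightarrow> psil x" using gt(1) by (simp add: psil_def)
  show "\<bar>psil x - psi k x\<bar> \<le> ak k * L x" using gt(2)[of k] by (simp add: psil_def ak_def mult_ac)
qed

lemma psil_cont: "continuous_on UNIV psil"
  by (rule weighted_limit_cont[where fs=psi and a=ak and w=L])
    (use psi_props psil_err ak_lim ak_nonneg cont_ell L_pos in \<open>auto simp: abs_minus_commute intro: less_imp_le\<close>)

lemma psil_bound: "\<bar>psil x\<bar> \<le> C * L x"
  by (rule LIMSEQ_le_const2[OF tendsto_rabs[OF psil_conv]]) (use psi_props in auto)

lemma psil_fix: "Q psil = psil"
proof
  fix z
  have "(\<lambda>k. psi (Suc k) z - Q psil z) \<longlonglongrightarrow> 0"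
  proof (rule Lim_null_comparison)
    show "\<forall>\<^sub>F k in sequentially. norm (psi (Suc k) z - Q psil z) \<le> \<beta> * ak k * kap * L z"
    proof (intro always_eventually allI)
      fix k
      have "\<bar>Q (psi k) z - Q psil z\<bar> \<le> \<beta> * ak k * kap * L z"
        by (rule Q_contr[where aa=C and ab=C]) (use psi_props psil_cont psil_bound psil_err ak_nonneg in \<open>auto simp: abs_minus_commute\<close>)
      then show "norm (psi (Suc k) z - Q psil z) \<le> \<beta> * ak k * kap * L z" by (simp add: psi_Suc)
    qed
    have "(\<lambda>k. \<beta> * ak k * kap * L z) \<longlonglongrightarrow> \<beta> * 0 * kap * L z"
      by (intro tendsto_mult tendsto_const ak_lim)
    then show "(\<lambda>k. \<beta> * ak k * kap * L z) \<longlonglongrightarrow> 0" by simp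
  qed
  then have "(\<lambda>k. psi (Suc k) z) \<longlonglongrightarrow> Q psil z" by (simp add: LIM_zero_iff)
  moreover have "(\<lambda>k. psi (Suc k) z) \<longlonglongrightarrow> psil z" using psil_conv by (rule LIMSEQ_Suc)
  ultimately show "Q psil z = psil z" by (rule LIMSEQ_unique)
qed

end


context setting
begin

definition w where "w x = max (r x) (psil x)"
definition Pw where "Pw y = (\<integral>x. w x \<partial>P y)"

lemma psil_cont': "continuous_on UNIV psil" by (rule psil_cont)

lemma psil_meas[measurable]: "psil \<in> borel_measurable borel"
  by (rule borel_measurable_continuous_onI[OF psil_cont])

lemma w_cont: "continuous_on UNIV w"
  unfolding w_def[abs_def] by (intro continuous_on_max cont_r psil_cont)

lemma w_meas[measurable]: "w \<in> borel_measurable borel"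
  by (rule borel_measurable_continuous_onI[OF w_cont])

lemma psil_eq: "psil y = c y + \<beta> * Pw y"
  using fun_cong[OF psil_fix, of y] by (simp add: Q_def Pw_def w_def)

lemma r_le_w: "r x \<le> w x" and psil_le_w: "psil x \<le> w x" by (auto simp: w_def)

end

locale stop = setting P r c g \<beta> m d m' d' n + mproc P z M F X
  for P :: "'z::topological_space \<Rightarrow> 'z measure" and r c g \<beta> m d m' d' n
    and z :: 'z and M :: "'w measure" and F X
begin

lemma finc: "(\<integral>\<^sup>+x. ennreal \<bar>c x\<bar> \<partial>kpow P t y) < \<infinity>"
  using Ec_bound[of t y] unfolding Ec_def by (simp add: le_less_trans)

lemma finr: "(\<integral>\<^sup>+x. ennreal \<bar>r x\<bar> \<partial>kpow P t y) < \<infinity>"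
  using Er_bound[of t y] unfolding Er_def by (simp add: le_less_trans)

lemma nn_psil: "(\<integral>\<^sup>+x. ennreal \<bar>psil x\<bar> \<partial>kpow P t y) \<le> ennreal (C * kap ^ t * L y)"
  by (rule nn_bound_L) (use psil_bound C_pos in \<open>auto intro: ennreal_leI\<close>)

lemma fin_psil: "(\<integral>\<^sup>+x. ennreal \<bar>psil x\<bar> \<partial>kpow P t y) < \<infinity>"
  using nn_psil[of t y] by (simp add: le_less_trans)

lemma nn_w: "(\<integral>\<^sup>+x. ennreal \<bar>w x\<bar> \<partial>kpow P t y) \<le> (\<integral>\<^sup>+x. ennreal \<bar>r x\<bar> \<partial>kpow P t y) + (\<integral>\<^sup>+x. ennreal \<bar>psil x\<bar> \<partial>kpow P t y)"
proof -
  have "(\<integral>\<^sup>+x. ennreal \<bar>w x\<bar> \<partial>kpow P t y) \<le> (\<integral>\<^sup>+x. ennreal \<bar>r x\<bar> + ennreal \<bar>psil x\<bar> \<partial>kpow P t y)"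
    by (rule nn_integral_mono) (auto simp: w_def ennreal_plus[symmetric] simp del: ennreal_plus intro!: ennreal_leI)
  also have "\<dots> = (\<integral>\<^sup>+x. ennreal \<bar>r x\<bar> \<partial>kpow P t y) + (\<integral>\<^sup>+x. ennreal \<bar>psil x\<bar> \<partial>kpow P t y)"
    by (rule nn_integral_add) auto
  finally show ?thesis .
qed

lemma fin_w: "(\<integral>\<^sup>+x. ennreal \<bar>w x\<bar> \<partial>kpow P t y) < \<infinity>"
  using nn_w[of t y] finr[of t y] fin_psil[of t y] by (simp add: le_less_trans)

lemma nn_rw: "(\<integral>\<^sup>+x. ennreal \<bar>r x - w x\<bar> \<partial>kpow P t y) \<le> (\<integral>\<^sup>+x. ennreal \<bar>r x\<bar> \<partial>kpow P t y) + (\<integral>\<^sup>+x. ennreal \<bar>psil x\<bar> \<partial>kpow P t y)"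
proof -
  have "(\<integral>\<^sup>+x. ennreal \<bar>r x - w x\<bar> \<partial>kpow P t y) \<le> (\<integral>\<^sup>+x. ennreal \<bar>r x\<bar> + ennreal \<bar>psil x\<bar> \<partial>kpow P t y)"
    by (rule nn_integral_mono) (auto simp: w_def ennreal_plus[symmetric] simp del: ennreal_plus intro!: ennreal_leI)
  also have "\<dots> = (\<integral>\<^sup>+x. ennreal \<bar>r x\<bar> \<partial>kpow P t y) + (\<integral>\<^sup>+x. ennreal \<bar>psil x\<bar> \<partial>kpow P t y)"
    by (rule nn_integral_add) auto
  finally show ?thesis .
qed

lemma pred_F_mono: "Measurable.pred (F s) Qp \<Longrightarrow> s \<le> t \<Longrightarrow> Measurable.pred (F t) Qp"
  by (rule measurable_from_subalg[where F="F s"]) (auto simp: subalgebra_def F_mono)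

lemma X_Ft: "j \<le> t \<Longrightarrow> X j \<in> F t \<rightarrow>\<^sub>M borel"
  by (rule measurable_from_subalg[OF _ X_F]) (auto simp: subalgebra_def F_mono)

lemma pred_M: "Measurable.pred (F t) Qp \<Longrightarrow> Measurable.pred M Qp"
  by (rule measurable_from_subalg[OF subalg])

definition pay where "pay j \<omega> = (\<Sum>t<j. \<beta> ^ t * c (X t \<omega>)) + \<beta> ^ j * r (X j \<omega>)"

lemma pay_meas[measurable]: "pay j \<in> borel_measurable M"
  unfolding pay_def by measurable

definition Gs where "Gs j \<omega> = (\<Sum>t<Suc j. \<beta> ^ t * (\<bar>c (X t \<omega>)\<bar> + \<bar>r (X t \<omega>)\<bar>))"

lemma Gs_meas[measurable]: "Gs j \<in> borel_measurable M"
  unfolding Gs_def by measurable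

lemma pay_bound: "i \<le> j \<Longrightarrow> \<bar>(\<Sum>t<i. \<beta> ^ t * c (X t \<omega>)) + \<beta> ^ i * r (X i \<omega>)\<bar> \<le> Gs j \<omega>"
proof -
  assume ij: "i \<le> j"
  have bp: "\<beta> ^ t \<ge> 0" for t using beta by simp
  have "\<bar>(\<Sum>t<i. \<beta> ^ t * c (X t \<omega>)) + \<beta> ^ i * r (X i \<omega>)\<bar> \<le> (\<Sum>t<i. \<beta> ^ t * \<bar>c (X t \<omega>)\<bar>) + \<beta> ^ i * \<bar>r (X i \<omega>)\<bar>"
  proof -
    have "\<bar>\<Sum>t<i. \<beta> ^ t * c (X t \<omega>)\<bar> \<le> (\<Sum>t<i. \<bar>\<beta> ^ t * c (X t \<omega>)\<bar>)" by (rule sum_abs)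
    also have "\<dots> = (\<Sum>t<i. \<beta> ^ t * \<bar>c (X t \<omega>)\<bar>)" using bp by (simp add: abs_mult)
    finally have "\<bar>\<Sum>t<i. \<beta> ^ t * c (X t \<omega>)\<bar> \<le> (\<Sum>t<i. \<beta> ^ t * \<bar>c (X t \<omega>)\<bar>)" .
    moreover have "\<bar>\<beta> ^ i * r (X i \<omega>)\<bar> = \<beta> ^ i * \<bar>r (X i \<omega>)\<bar>" using bp[of i] by (simp add: abs_mult)
    moreover have "\<bar>(\<Sum>t<i. \<beta> ^ t * c (X t \<omega>)) + \<beta> ^ i * r (X i \<omega>)\<bar> \<le> \<bar>\<Sum>t<i. \<beta> ^ t * c (X t \<omega>)\<bar> + \<bar>\<beta> ^ i * r (X i \<omega>)\<bar>"
      by (rule abs_triangle_ineq)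
    ultimately show ?thesis by linarith
  qed
  also have "\<dots> \<le> Gs i \<omega>"
  proof -
    have "(\<Sum>t<i. \<beta> ^ t * \<bar>c (X t \<omega>)\<bar>) \<le> (\<Sum>t<i. \<beta> ^ t * (\<bar>c (X t \<omega>)\<bar> + \<bar>r (X t \<omega>)\<bar>))"
      using bp by (intro sum_mono mult_left_mono) auto
    moreover have "\<beta> ^ i * \<bar>r (X i \<omega>)\<bar> \<le> \<beta> ^ i * (\<bar>c (X i \<omega>)\<bar> + \<bar>r (X i \<omega>)\<bar>)"
      using bp[of i] by (intro mult_left_mono) auto
    ultimately show ?thesis by (simp add: Gs_def)
  qed
  also have "\<dots> \<le> Gs j \<omega>"
    unfolding Gs_def using ij bp by (intro sum_mono2) auto
  finally show ?thesis .
qed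

lemma enat_inf_iff: "(x = \<infinity>) \<longleftrightarrow> (\<forall>t. enat t < x)"
  by (cases x) auto

lemma sum_if_less: "(j::nat) \<le> k \<Longrightarrow> (\<Sum>t<k. if t < j then f t else 0) = (\<Sum>t<j. f t :: real)"
proof -
  assume "j \<le> k"
  then have "{..<k} \<inter> {t. t < j} = {..<j}" by auto
  then show ?thesis by (simp add: sum.If_cases)
qed

context
  fixes \<tau> :: "'w \<Rightarrow> enat"
  assumes st: "enat_stopping_time F \<tau>"
begin

lemma st_le: "Measurable.pred (F t) (\<lambda>\<omega>. \<tau> \<omega> \<le> enat t)"
  using st by (simp add: enat_stopping_time_def)

lemma st_gt: "Measurable.pred (F t) (\<lambda>\<omega>. enat t < \<tau> \<omega>)"
  using st_le[of t] by (simp add: not_le[symmetric])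

lemma st_eq: "Measurable.pred (F t) (\<lambda>\<omega>. \<tau> \<omega> = enat t)"
proof (cases t)
  case 0
  then show ?thesis using st_le[of 0] by (simp add: zero_enat_def[symmetric])
next
  case (Suc s)
  have "Measurable.pred (F t) (\<lambda>\<omega>. \<tau> \<omega> \<le> enat t \<and> \<not> \<tau> \<omega> \<le> enat s)"
  proof -
    have [measurable]: "Measurable.pred (F t) (\<lambda>\<omega>. \<tau> \<omega> \<le> enat s)" by (rule pred_F_mono[OF st_le]) (simp add: Suc)
    have [measurable]: "Measurable.pred (F t) (\<lambda>\<omega>. \<tau> \<omega> \<le> enat t)" by (rule st_le)
    show ?thesis by measurable
  qed
  moreover have "(\<tau> \<omega> \<le> enat t \<and> \<not> \<tau> \<omega> \<le> enat s) = (\<tau> \<omega> = enat t)" for \<omega>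
    using Suc by (cases "\<tau> \<omega>") auto
  ultimately show ?thesis by simp
qed

lemma st_ge: "Measurable.pred (F t) (\<lambda>\<omega>. enat t \<le> \<tau> \<omega>)"
proof (cases t)
  case 0
  then show ?thesis by (simp add: zero_enat_def[symmetric])
next
  case (Suc s)
  have "Measurable.pred (F t) (\<lambda>\<omega>. enat s < \<tau> \<omega>)"
    using pred_F_mono[OF st_gt[of s], of t] Suc by simp
  then show ?thesis using Suc by (simp add: Suc_ile_eq)
qed

lemma st_M[measurable]:
  "Measurable.pred M (\<lambda>\<omega>. \<tau> \<omega> \<le> enat t)" "Measurable.pred M (\<lambda>\<omega>. enat t < \<tau> \<omega>)"
  "Measurable.pred M (\<lambda>\<omega>. \<tau> \<omega> = enat t)" "Measurable.pred M (\<lambda>\<omega>. enat t \<le> \<tau> \<omega>)"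
  using pred_M[OF st_le] pred_M[OF st_gt] pred_M[OF st_eq] pred_M[OF st_ge] by auto

definition W where
  "W u k \<omega> = (\<Sum>t<k. \<beta> ^ t * (if enat t < \<tau> \<omega> then c (X t \<omega>) else 0) + \<beta> ^ t * (if \<tau> \<omega> = enat t then r (X t \<omega>) else 0))
     + \<beta> ^ k * (if enat k \<le> \<tau> \<omega> then u (X k \<omega>) else 0)"

lemma W_int:
  assumes [measurable]: "u \<in> borel_measurable borel" and fu: "(\<integral>\<^sup>+x. ennreal \<bar>u x\<bar> \<partial>kpow P k z) < \<infinity>"
  shows "integrable M (W u k)"
proof -
  have i1: "integrable M (\<lambda>\<omega>. \<Sum>t<k. \<beta> ^ t * (if enat t < \<tau> \<omega> then c (X t \<omega>) else 0) + \<beta> ^ t * (if \<tau> \<omega> = enat t then r (X t \<omega>) else 0))"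
  proof (rule Bochner_Integration.integrable_sum)
    fix t
    have a: "integrable M (\<lambda>\<omega>. if enat t < \<tau> \<omega> then c (X t \<omega>) else 0)"
      by (rule integrable_X_if[OF c_meas finc]) measurable
    have b: "integrable M (\<lambda>\<omega>. if \<tau> \<omega> = enat t then r (X t \<omega>) else 0)"
      by (rule integrable_X_if[OF r_meas finr]) measurable
    show "integrable M (\<lambda>\<omega>. \<beta> ^ t * (if enat t < \<tau> \<omega> then c (X t \<omega>) else 0) + \<beta> ^ t * (if \<tau> \<omega> = enat t then r (X t \<omega>) else 0))"
      using a b by simp
  qed
  have i2: "integrable M (\<lambda>\<omega>. if enat k \<le> \<tau> \<omega> then u (X k \<omega>) else 0)"
    by (rule integrable_X_if[OF _ fu]) measurable
  show ?thesis unfolding W_def[abs_def] using i1 i2 by simp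
qed

lemma W0: "(\<integral>\<omega>. W u 0 \<omega> \<partial>M) = u z" if [measurable]: "u \<in> borel_measurable borel"
proof -
  have "(\<integral>\<omega>. W u 0 \<omega> \<partial>M) = (\<integral>\<omega>. u z \<partial>M)"
    by (rule integral_cong_AE) (use X0 in \<open>auto simp: W_def zero_enat_def[symmetric] elim!: eventually_mono\<close>)
  then show ?thesis by (simp add: M.prob_space)
qed

definition D1 where "D1 k \<omega> = (if \<tau> \<omega> = enat k then r (X k \<omega>) - w (X k \<omega>) else 0)"
definition E2 where "E2 k \<omega> = (if enat k < \<tau> \<omega> then psil (X k \<omega>) - w (X k \<omega>) else 0)"

lemma D1_int: "integrable M (D1 k)"
proof -
  have "(\<integral>\<^sup>+x. ennreal \<bar>r x - w x\<bar> \<partial>kpow P k z) < \<infinity>"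
    using nn_rw[of k z] finr[of k z] fin_psil[of k z] by (simp add: le_less_trans)
  then show ?thesis unfolding D1_def[abs_def]
    by (intro integrable_X_if[where h="\<lambda>x. r x - w x"]) measurable
qed

lemma W_step: "(\<integral>\<omega>. W w (Suc k) \<omega> \<partial>M) = (\<integral>\<omega>. W w k \<omega> \<partial>M) + \<beta> ^ k * ((\<integral>\<omega>. D1 k \<omega> \<partial>M) + (\<integral>\<omega>. E2 k \<omega> \<partial>M))"
proof -
  let ?A = "{\<omega>\<in>space M. enat k < \<tau> \<omega>}"
  have A: "?A \<in> sets (F k)" using st_gt[of k] by (simp add: pred_def)
  define D2 where "D2 \<omega> = (if enat k < \<tau> \<omega> then c (X k \<omega>) - w (X k \<omega>) else 0)" for \<omega>
  define D3 where "D3 \<omega> = (if enat k < \<tau> \<omega> then w (X (Suc k) \<omega>) else 0)" for \<omega>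
  define D4 where "D4 \<omega> = indicator ?A \<omega> * Pw (X k \<omega>)" for \<omega>
  have iW: "integrable M (W w k)" by (rule W_int[OF w_meas fin_w])
  have iD1: "integrable M (D1 k)" by (rule D1_int)
  have iD2: "integrable M D2"
  proof -
    have "(\<integral>\<^sup>+x. ennreal \<bar>c x - w x\<bar> \<partial>kpow P k z) \<le> (\<integral>\<^sup>+x. ennreal \<bar>c x\<bar> + ennreal \<bar>w x\<bar> \<partial>kpow P k z)"
      by (rule nn_integral_mono) (auto simp: ennreal_plus[symmetric] simp del: ennreal_plus intro!: ennreal_leI)
    also have "\<dots> = (\<integral>\<^sup>+x. ennreal \<bar>c x\<bar> \<partial>kpow P k z) + (\<integral>\<^sup>+x. ennreal \<bar>w x\<bar> \<partial>kpow P k z)"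
      by (rule nn_integral_add) auto
    finally have "(\<integral>\<^sup>+x. ennreal \<bar>c x - w x\<bar> \<partial>kpow P k z) < \<infinity>"
      using finc[of k z] fin_w[of k z] by (simp add: le_less_trans)
    then show ?thesis unfolding D2_def[abs_def]
      by (intro integrable_X_if[where h="\<lambda>x. c x - w x"]) measurable
  qed
  have iD3: "integrable M D3" unfolding D3_def[abs_def]
    by (intro integrable_X_if fin_w) measurable
  note mi = markov_int[OF A w_meas fin_w]
  have iD4: "integrable M D4" using mi(1) by (simp add: D4_def[abs_def] Pw_def)
  have e34: "(\<integral>\<omega>. D3 \<omega> \<partial>M) = (\<integral>\<omega>. D4 \<omega> \<partial>M)"
  proof -
    have "(\<integral>\<omega>. D3 \<omega> \<partial>M) = (\<integral>\<omega>. indicator ?A \<omega> * w (X (Suc k) \<omega>) \<partial>M)"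
      by (rule Bochner_Integration.integral_cong) (auto simp: D3_def indicator_def)
    also have "\<dots> = (\<integral>\<omega>. D4 \<omega> \<partial>M)" using mi(2) by (simp add: D4_def[abs_def] Pw_def)
    finally show ?thesis .
  qed
  have pw: "W w (Suc k) \<omega> = W w k \<omega> + \<beta> ^ k * D1 k \<omega> + \<beta> ^ k * D2 \<omega> + \<beta> ^ Suc k * D3 \<omega>" for \<omega>
  proof -
    have "enat k \<le> \<tau> \<omega> \<longleftrightarrow> \<tau> \<omega> = enat k \<or> enat k < \<tau> \<omega>" by auto
    moreover have "enat (Suc k) \<le> \<tau> \<omega> \<longleftrightarrow> enat k < \<tau> \<omega>" by (rule Suc_ile_eq)
    ultimately show ?thesis
      by (auto simp: W_def D1_def D2_def D3_def algebra_simps)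
  qed
  have pe: "E2 k \<omega> = D2 \<omega> + \<beta> * D4 \<omega>" if "\<omega> \<in> space M" for \<omega>
    using that by (auto simp: E2_def D2_def D4_def psil_eq algebra_simps)
  have "(\<integral>\<omega>. W w (Suc k) \<omega> \<partial>M) = (\<integral>\<omega>. W w k \<omega> + \<beta> ^ k * D1 k \<omega> + \<beta> ^ k * D2 \<omega> + \<beta> ^ Suc k * D3 \<omega> \<partial>M)"
    by (simp add: pw)
  also have "\<dots> = (\<integral>\<omega>. W w k \<omega> \<partial>M) + \<beta> ^ k * (\<integral>\<omega>. D1 k \<omega> \<partial>M) + \<beta> ^ k * (\<integral>\<omega>. D2 \<omega> \<partial>M) + \<beta> ^ Suc k * (\<integral>\<omega>. D3 \<omega> \<partial>M)"
    using iW iD1 iD2 iD3 by simp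
  also have "\<dots> = (\<integral>\<omega>. W w k \<omega> \<partial>M) + \<beta> ^ k * ((\<integral>\<omega>. D1 k \<omega> \<partial>M) + ((\<integral>\<omega>. D2 \<omega> \<partial>M) + \<beta> * (\<integral>\<omega>. D4 \<omega> \<partial>M)))"
    by (simp add: e34 algebra_simps)
  also have "(\<integral>\<omega>. D2 \<omega> \<partial>M) + \<beta> * (\<integral>\<omega>. D4 \<omega> \<partial>M) = (\<integral>\<omega>. E2 k \<omega> \<partial>M)"
  proof -
    have "(\<integral>\<omega>. E2 k \<omega> \<partial>M) = (\<integral>\<omega>. D2 \<omega> + \<beta> * D4 \<omega> \<partial>M)"
      by (rule Bochner_Integration.integral_cong) (auto simp: pe)
    also have "\<dots> = (\<integral>\<omega>. D2 \<omega> \<partial>M) + \<beta> * (\<integral>\<omega>. D4 \<omega> \<partial>M)" using iD2 iD4 by simp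
    finally show ?thesis by simp
  qed
  finally show ?thesis .
qed

lemma E2_int: "integrable M (E2 k)"
proof -
  have "(\<integral>\<^sup>+x. ennreal \<bar>psil x - w x\<bar> \<partial>kpow P k z) \<le> (\<integral>\<^sup>+x. ennreal \<bar>psil x\<bar> + ennreal \<bar>w x\<bar> \<partial>kpow P k z)"
    by (rule nn_integral_mono) (auto simp: ennreal_plus[symmetric] simp del: ennreal_plus intro!: ennreal_leI)
  also have "\<dots> = (\<integral>\<^sup>+x. ennreal \<bar>psil x\<bar> \<partial>kpow P k z) + (\<integral>\<^sup>+x. ennreal \<bar>w x\<bar> \<partial>kpow P k z)"
    by (rule nn_integral_add) auto
  finally have "(\<integral>\<^sup>+x. ennreal \<bar>psil x - w x\<bar> \<partial>kpow P k z) < \<infinity>"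
    using fin_psil[of k z] fin_w[of k z] by (simp add: le_less_trans)
  then show ?thesis unfolding E2_def[abs_def]
    by (intro integrable_X_if[where h="\<lambda>x. psil x - w x"]) measurable
qed

lemma W_le: "(\<integral>\<omega>. W w k \<omega> \<partial>M) \<le> w z"
proof (induction k)
  case 0
  then show ?case by (simp add: W0)
next
  case (Suc k)
  have "(\<integral>\<omega>. D1 k \<omega> \<partial>M) \<le> (\<integral>\<omega>. 0 \<partial>M)"
    by (rule integral_mono[OF D1_int]) (auto simp: D1_def r_le_w)
  moreover have "(\<integral>\<omega>. E2 k \<omega> \<partial>M) \<le> (\<integral>\<omega>. 0 \<partial>M)"
    by (rule integral_mono[OF E2_int]) (auto simp: E2_def psil_le_w)
  ultimately have "\<beta> ^ k * ((\<integral>\<omega>. D1 k \<omega> \<partial>M) + (\<integral>\<omega>. E2 k \<omega> \<partial>M)) \<le> 0"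
    using beta by (simp add: mult_nonneg_nonpos)
  then show ?case using Suc W_step[of k] by linarith
qed

lemma Wr_le: "(\<integral>\<omega>. W r k \<omega> \<partial>M) \<le> w z"
proof -
  have "(\<integral>\<omega>. W r k \<omega> \<partial>M) \<le> (\<integral>\<omega>. W w k \<omega> \<partial>M)"
    by (rule integral_mono[OF W_int[OF r_meas finr] W_int[OF w_meas fin_w]])
      (use beta in \<open>auto simp: W_def r_le_w intro!: mult_left_mono\<close>)
  then show ?thesis using W_le[of k] by linarith
qed

lemma W_late: "\<tau> \<omega> = enat j \<Longrightarrow> j < k \<Longrightarrow> W u k \<omega> = pay j \<omega>"
proof -
  assume tj: "\<tau> \<omega> = enat j" and jk: "j < k"
  have s1: "(\<Sum>t<k. \<beta> ^ t * (if enat t < \<tau> \<omega> then c (X t \<omega>) else 0) + \<beta> ^ t * (if \<tau> \<omega> = enat t then r (X t \<omega>) else 0))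
      = (\<Sum>t<k. (if t < j then \<beta> ^ t * c (X t \<omega>) else 0) + (if t = j then \<beta> ^ t * r (X t \<omega>) else 0))"
    by (rule sum.cong) (use tj in auto)
  have s2: "\<beta> ^ k * (if enat k \<le> \<tau> \<omega> then u (X k \<omega>) else 0) = 0" using tj jk by auto
  have "W u k \<omega> = (\<Sum>t<k. (if t < j then \<beta> ^ t * c (X t \<omega>) else 0)) + (\<Sum>t<k. (if t = j then \<beta> ^ t * r (X t \<omega>) else 0))"
    unfolding W_def s1 s2 by (simp add: sum.distrib)
  also have "\<dots> = pay j \<omega>"
    using jk by (simp add: sum_if_less pay_def)
  finally show ?thesis .
qed

lemma W_early: "\<tau> \<omega> = enat j \<Longrightarrow> k \<le> j \<Longrightarrow> W u k \<omega> = (\<Sum>t<k. \<beta> ^ t * c (X t \<omega>)) + \<beta> ^ k * u (X k \<omega>)"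
  by (auto simp: W_def intro!: sum.cong)

lemma te_meas: "(\<lambda>\<omega>. the_enat (\<tau> \<omega>)) \<in> M \<rightarrow>\<^sub>M count_space UNIV"
proof -
  have inf[measurable]: "Measurable.pred M (\<lambda>\<omega>. \<tau> \<omega> = \<infinity>)"
    unfolding enat_inf_iff by measurable
  show ?thesis
    unfolding measurable_count_space_eq2_countable
  proof (intro conjI ballI)
    fix a :: nat
    have "(\<lambda>\<omega>. the_enat (\<tau> \<omega>) = a) = (\<lambda>\<omega>. \<tau> \<omega> = enat a \<or> (\<tau> \<omega> = \<infinity> \<and> the_enat \<infinity> = a))"
    proof
      fix \<omega> show "(the_enat (\<tau> \<omega>) = a) = (\<tau> \<omega> = enat a \<or> (\<tau> \<omega> = \<infinity> \<and> the_enat \<infinity> = a))"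
        by (cases "\<tau> \<omega>") auto
    qed
    moreover have "Measurable.pred M (\<lambda>\<omega>. \<tau> \<omega> = enat a \<or> (\<tau> \<omega> = \<infinity> \<and> the_enat \<infinity> = a))" by measurable
    ultimately have pa[measurable]: "Measurable.pred M (\<lambda>\<omega>. the_enat (\<tau> \<omega>) = a)" by simp
    have "(\<lambda>\<omega>. the_enat (\<tau> \<omega>)) -` {a} \<inter> space M = {\<omega>\<in>space M. the_enat (\<tau> \<omega>) = a}" by auto
    also have "\<dots> \<in> sets M" by measurable
    finally show "(\<lambda>\<omega>. the_enat (\<tau> \<omega>)) -` {a} \<inter> space M \<in> sets M" .
  qed auto
qed

lemma payoff_meas: "(\<lambda>\<omega>. pay (the_enat (\<tau> \<omega>)) \<omega>) \<in> borel_measurable M"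
  by (rule measurable_compose_countable[OF _ te_meas]) simp

lemma G_meas: "(\<lambda>\<omega>. Gs (the_enat (\<tau> \<omega>)) \<omega>) \<in> borel_measurable M"
  by (rule measurable_compose_countable[OF _ te_meas]) simp

lemma G_int: "integrable M (\<lambda>\<omega>. Gs (the_enat (\<tau> \<omega>)) \<omega>)"
proof (rule integrableI_bounded[OF G_meas])
  define f where "f t \<omega> = ennreal (\<beta> ^ t * (\<bar>c (X t \<omega>)\<bar> + \<bar>r (X t \<omega>)\<bar>))" for t \<omega>
  have fm[measurable]: "f t \<in> borel_measurable M" for t unfolding f_def by measurable
  have bp: "\<beta> ^ t \<ge> 0" for t using beta by simp
  define b where "b t = \<beta> ^ t * (K * kap ^ t * L z + (\<bar>r z\<bar> + K * kap ^ t * L z))" for t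
  have b0: "b t \<ge> 0" for t using bp[of t] K_pos kap(1) L_pos[of z] by (simp add: b_def)
  have sb: "summable b"
  proof -
    have "b = (\<lambda>t. (2 * K * L z) * (\<beta> * kap) ^ t + \<bar>r z\<bar> * \<beta> ^ t)"
      by (auto simp: b_def fun_eq_iff power_mult_distrib algebra_simps)
    moreover have "summable (\<lambda>t. (2 * K * L z) * (\<beta> * kap) ^ t + \<bar>r z\<bar> * \<beta> ^ t)"
      using beta kap by (intro summable_add summable_mult summable_geometric) auto
    ultimately show ?thesis by simp
  qed
  have Gle: "ennreal (norm (Gs (the_enat (\<tau> \<omega>)) \<omega>)) \<le> (\<Sum>t. f t \<omega>)" for \<omega>
  proof -
    have G0: "Gs j \<omega> \<ge> 0" for j unfolding Gs_def using bp by (intro sum_nonneg) auto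
    have "ennreal (Gs j \<omega>) = (\<Sum>t<Suc j. f t \<omega>)" for j
      unfolding Gs_def f_def using bp by (subst sum_ennreal) auto
    moreover have "(\<Sum>t<Suc j. f t \<omega>) \<le> (\<Sum>t. f t \<omega>)" for j by (rule sum_le_suminf) auto
    ultimately show ?thesis using G0 by (simp del: sum.lessThan_Suc)
  qed
  have ft: "(\<integral>\<^sup>+\<omega>. f t \<omega> \<partial>M) \<le> ennreal (b t)" for t
  proof -
    have "(\<integral>\<^sup>+\<omega>. f t \<omega> \<partial>M) = (\<integral>\<^sup>+\<omega>. ennreal (\<beta> ^ t) * (ennreal \<bar>c (X t \<omega>)\<bar> + ennreal \<bar>r (X t \<omega>)\<bar>) \<partial>M)"
      unfolding f_def using bp[of t] by (simp add: ennreal_mult ennreal_plus[symmetric] del: ennreal_plus)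
    also have "\<dots> = ennreal (\<beta> ^ t) * ((\<integral>\<^sup>+\<omega>. ennreal \<bar>c (X t \<omega>)\<bar> \<partial>M) + (\<integral>\<^sup>+\<omega>. ennreal \<bar>r (X t \<omega>)\<bar> \<partial>M))"
      by (simp add: nn_integral_cmult nn_integral_add)
    also have "\<dots> = ennreal (\<beta> ^ t) * (Ec t z + Er t z)"
    proof -
      have "(\<integral>\<^sup>+\<omega>. ennreal \<bar>c (X t \<omega>)\<bar> \<partial>M) = Ec t z" unfolding Ec_def by (rule nn_law) measurable
      moreover have "(\<integral>\<^sup>+\<omega>. ennreal \<bar>r (X t \<omega>)\<bar> \<partial>M) = Er t z" unfolding Er_def by (rule nn_law) measurable
      ultimately show ?thesis by simp
    qed
    also have "\<dots> \<le> ennreal (\<beta> ^ t) * (ennreal (K * kap ^ t * L z) + ennreal (\<bar>r z\<bar> + K * kap ^ t * L z))"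
      by (intro mult_left_mono add_mono Ec_bound Er_bound) auto
    also have "\<dots> = ennreal (b t)"
    proof -
      have nn: "0 \<le> K * kap ^ t * L z" using K_pos kap(1) L_pos[of z] by simp
      have e1: "ennreal (K * kap ^ t * L z) + ennreal (\<bar>r z\<bar> + K * kap ^ t * L z) = ennreal (K * kap ^ t * L z + (\<bar>r z\<bar> + K * kap ^ t * L z))"
        by (rule ennreal_plus[symmetric]) (use nn in auto)
      have e2: "ennreal (\<beta> ^ t) * ennreal (K * kap ^ t * L z + (\<bar>r z\<bar> + K * kap ^ t * L z)) = ennreal (b t)"
        unfolding b_def by (rule ennreal_mult'[symmetric]) (rule bp)
      show ?thesis unfolding e1 e2 ..
    qed
    finally show ?thesis .
  qed
  have "(\<integral>\<^sup>+\<omega>. ennreal (norm (Gs (the_enat (\<tau> \<omega>)) \<omega>)) \<partial>M) \<le> (\<integral>\<^sup>+\<omega>. (\<Sum>t. f t \<omega>) \<partial>M)"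
    by (rule nn_integral_mono) (rule Gle)
  also have "\<dots> = (\<Sum>t. \<integral>\<^sup>+\<omega>. f t \<omega> \<partial>M)"
    by (rule nn_integral_suminf) simp
  also have "\<dots> \<le> (\<Sum>t. ennreal (b t))"
    by (rule suminf_le) (use ft in auto)
  also have "\<dots> = ennreal (\<Sum>t. b t)"
    by (rule suminf_ennreal2[OF b0 sb])
  also have "\<dots> < \<infinity>" by simp
  finally show "(\<integral>\<^sup>+\<omega>. ennreal (norm (Gs (the_enat (\<tau> \<omega>)) \<omega>)) \<partial>M) < \<infinity>" .
qed

lemma W_bound: "\<tau> \<omega> = enat j \<Longrightarrow> \<bar>W r k \<omega>\<bar> \<le> Gs j \<omega>"
proof (cases "k \<le> j")
  case True
  assume tj: "\<tau> \<omega> = enat j"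
  show ?thesis using W_early[OF tj True] pay_bound[OF True] by simp
next
  case False
  assume tj: "\<tau> \<omega> = enat j"
  then have "W r k \<omega> = pay j \<omega>" using False by (intro W_late) auto
  then show ?thesis using pay_bound[of j j \<omega>] by (simp add: pay_def)
qed

lemma payoff_le:
  assumes fin: "AE \<omega> in M. \<tau> \<omega> \<noteq> \<infinity>"
  shows "(\<integral>\<omega>. pay (the_enat (\<tau> \<omega>)) \<omega> \<partial>M) \<le> w z"
proof -
  have "(\<lambda>k. \<integral>\<omega>. W r k \<omega> \<partial>M) \<longlonglongrightarrow> (\<integral>\<omega>. pay (the_enat (\<tau> \<omega>)) \<omega> \<partial>M)"
  proof (rule integral_dominated_convergence[OF payoff_meas _ G_int])
    show "W r k \<in> borel_measurable M" for k
      by (rule borel_measurable_integrable[OF W_int[OF r_meas finr]])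
    show "AE \<omega> in M. (\<lambda>k. W r k \<omega>) \<longlonglongrightarrow> pay (the_enat (\<tau> \<omega>)) \<omega>"
      using fin
    proof eventually_elim
      case (elim \<omega>)
      then obtain j where tj: "\<tau> \<omega> = enat j" by auto
      have "\<forall>\<^sub>F k in sequentially. W r k \<omega> = pay (the_enat (\<tau> \<omega>)) \<omega>"
        using eventually_gt_at_top[of j] by eventually_elim (simp add: W_late[OF tj] tj)
      then show ?case by (rule tendsto_eventually)
    qed
    show "AE \<omega> in M. norm (W r k \<omega>) \<le> Gs (the_enat (\<tau> \<omega>)) \<omega>" for k
      using fin
    proof eventually_elim
      case (elim \<omega>)
      then obtain j where tj: "\<tau> \<omega> = enat j" by auto
      then show ?case using W_bound[OF tj, of k] by simp
    qed
  qed
  then show ?thesis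
    by (rule LIMSEQ_le_const2) (use Wr_le in auto)
qed

end

end


context stop
begin

definition hit where "hit N \<omega> = (LEAST j. j = N \<or> \<not> r (X j \<omega>) < psil (X j \<omega>))"
definition sig where "sig N \<omega> = enat (hit N \<omega>)"

lemma hit_le: "hit N \<omega> \<le> N"
  unfolding hit_def by (rule Least_le) simp

lemma hit_stop: "hit N \<omega> < N \<Longrightarrow> \<not> r (X (hit N \<omega>) \<omega>) < psil (X (hit N \<omega>) \<omega>)"
proof -
  assume a: "hit N \<omega> < N"
  have "hit N \<omega> = N \<or> \<not> r (X (hit N \<omega>) \<omega>) < psil (X (hit N \<omega>) \<omega>)"
    unfolding hit_def by (rule LeastI[of _ N]) simp
  then show ?thesis using a by auto
qed

lemma hit_cont: "k < hit N \<omega> \<Longrightarrow> r (X k \<omega>) < psil (X k \<omega>)"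
  using not_less_Least[of k "\<lambda>j. j = N \<or> \<not> r (X j \<omega>) < psil (X j \<omega>)"] by (auto simp: hit_def)

lemma hit_iff: "hit N \<omega> \<le> t \<longleftrightarrow> (\<exists>j\<in>{..t}. j = N \<or> \<not> r (X j \<omega>) < psil (X j \<omega>))"
proof
  assume "hit N \<omega> \<le> t"
  moreover have "hit N \<omega> = N \<or> \<not> r (X (hit N \<omega>) \<omega>) < psil (X (hit N \<omega>) \<omega>)"
    unfolding hit_def by (rule LeastI[of _ N]) simp
  ultimately show "\<exists>j\<in>{..t}. j = N \<or> \<not> r (X j \<omega>) < psil (X j \<omega>)" by auto
next
  assume "\<exists>j\<in>{..t}. j = N \<or> \<not> r (X j \<omega>) < psil (X j \<omega>)"
  then obtain j where "j \<le> t" "j = N \<or> \<not> r (X j \<omega>) < psil (X j \<omega>)" by auto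
  moreover have "hit N \<omega> \<le> j" unfolding hit_def by (rule Least_le) (use \<open>j = N \<or> _\<close> in simp)
  ultimately show "hit N \<omega> \<le> t" by simp
qed

lemma sig_st: "enat_stopping_time F (sig N)"
  unfolding enat_stopping_time_def
proof
  fix t
  have pe: "Measurable.pred (F t) (\<lambda>\<omega>. \<exists>j\<in>{..t}. j = N \<or> \<not> r (X j \<omega>) < psil (X j \<omega>))"
  proof (rule pred_intros_countable_bounded(4))
    fix j assume "j \<in> {..t}"
    then have Xj: "X j \<in> F t \<rightarrow>\<^sub>M borel" by (intro X_Ft) auto
    have m1: "(\<lambda>\<omega>. r (X j \<omega>)) \<in> borel_measurable (F t)" by (rule measurable_compose[OF Xj r_meas])
    have m2: "(\<lambda>\<omega>. psil (X j \<omega>)) \<in> borel_measurable (F t)" by (rule measurable_compose[OF Xj psil_meas])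
    have "{\<omega> \<in> space (F t). r (X j \<omega>) < psil (X j \<omega>)} \<in> sets (F t)" by (rule borel_measurable_less[OF m1 m2])
    from pred_sets1[OF this measurable_ident]
    have pl: "Measurable.pred (F t) (\<lambda>\<omega>. r (X j \<omega>) < psil (X j \<omega>))" by simp
    show "Measurable.pred (F t) (\<lambda>\<omega>. j = N \<or> \<not> r (X j \<omega>) < psil (X j \<omega>))"
    proof (cases "j = N")
      case True
      then show ?thesis by simp
    next
      case False
      then show ?thesis using pred_intros_logic(2)[OF pl] by simp
    qed
  qed
  have eq: "(\<lambda>\<omega>. sig N \<omega> \<le> enat t) = (\<lambda>\<omega>. \<exists>j\<in>{..t}. j = N \<or> \<not> r (X j \<omega>) < psil (X j \<omega>))"
    by (rule ext) (simp only: sig_def enat_ord_simps hit_iff)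
  show "Measurable.pred (F t) (\<lambda>\<omega>. sig N \<omega> \<le> enat t)" unfolding eq by (rule pe)
qed

definition Bn where "Bn N = \<bar>r z\<bar> + K * kap ^ N * L z + C * kap ^ N * L z"

lemma D1_bound: "\<bar>\<integral>\<omega>. D1 (sig N) N \<omega> \<partial>M\<bar> \<le> Bn N"
proof -
  have nnb: "(\<integral>\<^sup>+x. ennreal \<bar>r x - w x\<bar> \<partial>kpow P N z) \<le> ennreal (Bn N)"
  proof -
    have "(\<integral>\<^sup>+x. ennreal \<bar>r x - w x\<bar> \<partial>kpow P N z) \<le> Er N z + (\<integral>\<^sup>+x. ennreal \<bar>psil x\<bar> \<partial>kpow P N z)"
      using nn_rw[of N z] by (simp add: Er_def)
    also have "\<dots> \<le> ennreal (\<bar>r z\<bar> + K * kap ^ N * L z) + ennreal (C * kap ^ N * L z)"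
      by (intro add_mono Er_bound nn_psil)
    also have "\<dots> = ennreal (Bn N)"
    proof -
      have a: "0 \<le> \<bar>r z\<bar> + K * kap ^ N * L z" using K_pos kap(1) L_pos[of z] by simp
      have b: "0 \<le> C * kap ^ N * L z" using C_pos kap(1) L_pos[of z] by simp
      show ?thesis unfolding Bn_def using ennreal_plus[OF a b] by simp
    qed
    finally show ?thesis .
  qed
  have fin: "(\<integral>\<^sup>+x. ennreal \<bar>r x - w x\<bar> \<partial>kpow P N z) < \<infinity>" using nnb by (simp add: le_less_trans)
  have ik: "integrable (kpow P N z) (\<lambda>x. \<bar>r x - w x\<bar>)"
    by (rule integrableI_bounded) (use fin in auto)
  have iX: "integrable M (\<lambda>\<omega>. \<bar>r (X N \<omega>) - w (X N \<omega>)\<bar>)"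
    by (rule integrable_X) (use fin in auto)
  have "\<bar>\<integral>\<omega>. D1 (sig N) N \<omega> \<partial>M\<bar> \<le> (\<integral>\<omega>. \<bar>D1 (sig N) N \<omega>\<bar> \<partial>M)"
    using integral_norm_bound[of M "D1 (sig N) N"] by simp
  also have "\<dots> \<le> (\<integral>\<omega>. \<bar>r (X N \<omega>) - w (X N \<omega>)\<bar> \<partial>M)"
    by (rule integral_mono[OF integrable_abs[OF D1_int[OF sig_st]] iX]) (auto simp: D1_def[OF sig_st])
  also have "\<dots> = (\<integral>x. \<bar>r x - w x\<bar> \<partial>kpow P N z)"
    by (rule int_law) measurable
  also have "\<dots> \<le> Bn N"
  proof -
    have "ennreal (\<integral>x. \<bar>r x - w x\<bar> \<partial>kpow P N z) = (\<integral>\<^sup>+x. ennreal \<bar>r x - w x\<bar> \<partial>kpow P N z)"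
      by (rule nn_integral_eq_integral[symmetric, OF ik]) auto
    then have "ennreal (\<integral>x. \<bar>r x - w x\<bar> \<partial>kpow P N z) \<le> ennreal (Bn N)" using nnb by simp
    moreover have "Bn N \<ge> 0" unfolding Bn_def using K_pos C_pos kap(1) L_pos[of z] by simp
    ultimately show ?thesis by (simp add: ennreal_le_iff)
  qed
  finally show ?thesis .
qed

lemma sig_val: "w z - \<beta> ^ N * Bn N \<le> (\<integral>\<omega>. pay (the_enat (sig N \<omega>)) \<omega> \<partial>M)"
proof -
  note st = sig_st[of N]
  have E20: "E2 (sig N) k = (\<lambda>_. 0)" for k
  proof
    fix \<omega>
    show "E2 (sig N) k \<omega> = 0"
    proof (cases "k < hit N \<omega>")
      case True
      then have "r (X k \<omega>) < psil (X k \<omega>)" by (rule hit_cont)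
      then show ?thesis using True by (simp add: E2_def[OF st] w_def sig_def)
    next
      case False
      then show ?thesis by (simp add: E2_def[OF st] sig_def)
    qed
  qed
  have D10: "k < N \<Longrightarrow> D1 (sig N) k = (\<lambda>_. 0)" for k
  proof -
    assume kN: "k < N"
    show ?thesis
    proof
      fix \<omega>
      show "D1 (sig N) k \<omega> = 0"
      proof (cases "hit N \<omega> = k")
        case True
        then have "\<not> r (X k \<omega>) < psil (X k \<omega>)" using hit_stop[of N \<omega>] kN by auto
        then show ?thesis by (simp add: D1_def[OF st] w_def)
      next
        case False
        then show ?thesis by (simp add: D1_def[OF st] sig_def)
      qed
    qed
  qed
  have Wk: "k \<le> N \<Longrightarrow> (\<integral>\<omega>. W (sig N) w k \<omega> \<partial>M) = w z" for k
  proof (induction k)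
    case 0
    then show ?case by (simp add: W0[OF st])
  next
    case (Suc k)
    then show ?case using W_step[OF st, of k] by (simp add: E20 D10)
  qed
  have WN: "(\<integral>\<omega>. W (sig N) w (Suc N) \<omega> \<partial>M) = w z + \<beta> ^ N * (\<integral>\<omega>. D1 (sig N) N \<omega> \<partial>M)"
    using W_step[OF st, of N] Wk[of N] by (simp add: E20)
  have pw: "pay (the_enat (sig N \<omega>)) \<omega> = W (sig N) w (Suc N) \<omega>" for \<omega>
    using W_late[OF st, of \<omega> "hit N \<omega>" "Suc N" w] hit_le[of N \<omega>] by (simp add: sig_def)
  have "\<beta> ^ N * (\<integral>\<omega>. D1 (sig N) N \<omega> \<partial>M) \<ge> - (\<beta> ^ N * Bn N)"
  proof -
    have "\<bar>\<beta> ^ N * (\<integral>\<omega>. D1 (sig N) N \<omega> \<partial>M)\<bar> \<le> \<beta> ^ N * Bn N"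
      using D1_bound[of N] beta by (simp add: abs_mult mult_left_mono)
    then show ?thesis by linarith
  qed
  then show ?thesis using WN by (simp add: pw)
qed

lemma vstar_eq:
  "(SUP \<tau> \<in> {\<tau>. enat_stopping_time F \<tau> \<and> (AE \<omega> in M. \<tau> \<omega> \<noteq> \<infinity>)}.
      \<integral>\<omega>. (\<Sum>t<the_enat (\<tau> \<omega>). \<beta> ^ t * c (X t \<omega>)) + \<beta> ^ the_enat (\<tau> \<omega>) * r (X (the_enat (\<tau> \<omega>)) \<omega>) \<partial>M) = w z"
proof -
  define S where "S = {\<tau>. enat_stopping_time F \<tau> \<and> (AE \<omega> in M. \<tau> \<omega> \<noteq> \<infinity>)}"
  define V where "V \<tau> = (\<integral>\<omega>. pay (the_enat (\<tau> \<omega>)) \<omega> \<partial>M)" for \<tau> :: "'w \<Rightarrow> enat"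
  have eqV: "(\<lambda>\<tau>. \<integral>\<omega>. (\<Sum>t<the_enat (\<tau> \<omega>). \<beta> ^ t * c (X t \<omega>)) + \<beta> ^ the_enat (\<tau> \<omega>) * r (X (the_enat (\<tau> \<omega>)) \<omega>) \<partial>M) = V"
    unfolding V_def pay_def by (rule refl)
  have z0: "(\<lambda>_. 0) \<in> S" unfolding S_def enat_stopping_time_def by (simp, rule exI[of _ 0], rule zero_enat_def[symmetric])
  then have ne: "S \<noteq> {}" by blast
  have ub: "V \<tau> \<le> w z" if "\<tau> \<in> S" for \<tau>
  proof -
    have "enat_stopping_time F \<tau>" "AE \<omega> in M. \<tau> \<omega> \<noteq> \<infinity>" using that unfolding S_def by auto
    then show ?thesis unfolding V_def by (rule payoff_le)
  qed
  have bdd: "bdd_above (V ` S)" by (rule bdd_aboveI2[where M="w z"]) (rule ub)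
  have le: "(SUP \<tau>\<in>S. V \<tau>) \<le> w z" by (rule cSUP_least[OF ne ub])
  have sigS: "sig N \<in> S" for N unfolding S_def using sig_st[of N] by (simp add: sig_def)
  have lo: "w z - \<beta> ^ N * Bn N \<le> (SUP \<tau>\<in>S. V \<tau>)" for N
  proof -
    have "V (sig N) \<le> (SUP \<tau>\<in>S. V \<tau>)" by (rule cSUP_upper[OF sigS bdd])
    moreover have "w z - \<beta> ^ N * Bn N \<le> V (sig N)" unfolding V_def by (rule sig_val)
    ultimately show ?thesis by (rule order_trans[rotated])
  qed
  have e: "(\<lambda>N. \<beta> ^ N * Bn N) = (\<lambda>N. \<bar>r z\<bar> * \<beta> ^ N + ((K + C) * L z) * (\<beta> * kap) ^ N)"
    by (auto simp: fun_eq_iff Bn_def power_mult_distrib algebra_simps)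
  have "(\<lambda>N. \<bar>r z\<bar> * \<beta> ^ N + ((K + C) * L z) * (\<beta> * kap) ^ N) \<longlonglongrightarrow> \<bar>r z\<bar> * 0 + ((K + C) * L z) * 0"
    using beta kap by (intro tendsto_add tendsto_mult tendsto_const LIMSEQ_power_zero) auto
  then have l0: "(\<lambda>N. \<beta> ^ N * Bn N) \<longlonglongrightarrow> 0" unfolding e by simp
  have lim: "(\<lambda>N. w z - \<beta> ^ N * Bn N) \<longlonglongrightarrow> w z"
    using tendsto_diff[OF tendsto_const l0, of "w z"] by simp
  have ge: "w z \<le> (SUP \<tau>\<in>S. V \<tau>)"
    by (rule LIMSEQ_le_const2[OF lim]) (use lo in blast)
  have "(SUP \<tau>\<in>S. V \<tau>) = w z" using le ge by (rule antisym)
  then show ?thesis unfolding eqV S_def .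
qed

end

theorem proposition1:
  fixes P :: "'z::topological_space \<Rightarrow> 'z measure"
    and M :: "'z \<Rightarrow> 'w measure" and F :: "'z \<Rightarrow> nat \<Rightarrow> 'w measure"
    and X :: "'z \<Rightarrow> nat \<Rightarrow> 'w \<Rightarrow> 'z"
    and r c g :: "'z \<Rightarrow> real" and \<beta> m d m' d' :: real and n :: nat
  assumes kernel: "P \<in> borel \<rightarrow>\<^sub>M prob_algebra borel"
    and process: "\<And>z. markov_process P z (M z) (F z) (X z)"
    and beta: "0 < \<beta>" "\<beta> < 1"
    and r_meas: "r \<in> borel_measurable borel" and c_meas: "c \<in> borel_measurable borel"
    and g_meas: "g \<in> borel_measurable borel" and g_nonneg: "\<And>z. g z \<ge> 0"
    and md: "m \<ge> 0" "d \<ge> 0" "\<beta> * m < 1"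
    and A_r: "\<And>z. (\<integral>\<^sup>+ z'. ennreal \<bar>r z'\<bar> \<partial>kpow P n z) \<le> ennreal (g z)"
    and A_c: "\<And>z. (\<integral>\<^sup>+ z'. ennreal \<bar>c z'\<bar> \<partial>kpow P n z) \<le> ennreal (g z)"
    and A_g: "\<And>z. (\<integral>\<^sup>+ z'. ennreal (g z') \<partial>P z) \<le> ennreal (m * g z + d)"
    and fin_r: "\<And>z t. t < n \<Longrightarrow> integrable (kpow P t z) r"
    and fin_c: "\<And>z t. t < n \<Longrightarrow> integrable (kpow P t z) c"
    and m'd': "m' > 0" "d' > 0" "m + 2 * m' > 1" "\<beta> * (m + 2 * m') < 1"
      "d' \<ge> d / (m + 2 * m' - 1)"
    and feller: "\<And>h :: 'z \<Rightarrow> real. continuous_on UNIV h \<Longrightarrow> bounded (range h) \<Longrightarrow>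
        continuous_on UNIV (\<lambda>z. \<integral>z'. h z' \<partial>P z) \<and> bounded (range (\<lambda>z. \<integral>z'. h z' \<partial>P z))"
    and cont_c: "continuous_on UNIV c" and cont_r: "continuous_on UNIV r"
    and cont_Pr: "continuous_on UNIV (\<lambda>z. \<integral>z'. \<bar>r z'\<bar> \<partial>P z)"
    and cont_ell: "continuous_on UNIV (ell P r c g n m' d')"
    and cont_Pell: "continuous_on UNIV (\<lambda>z. \<integral>z'. ell P r c g n m' d' z' \<partial>P z)"
  shows "continuous_on UNIV (psi_star P \<beta> r c M F X)
       \<and> continuous_on UNIV (v_star \<beta> r c M F X)"
  proof -
  interpret S: setting P r c g \<beta> m d m' d' n
    by unfold_locales (fact kernel beta r_meas c_meas g_meas g_nonneg md A_r A_c A_g fin_r fin_c m'd' feller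
        cont_c cont_r cont_Pr cont_ell cont_Pell)+
  have vs: "v_star \<beta> r c M F X y = S.w y" for y
  proof -
    interpret T: stop P r c g \<beta> m d m' d' n y "M y" "F y" "X y"
      by (intro stop.intro S.setting_axioms mproc.intro kern.intro mproc_axioms.intro kernel process)
    show ?thesis unfolding v_star_def by (rule T.vstar_eq)
  qed
  have ps: "psi_star P \<beta> r c M F X y = S.psil y" for y
    unfolding psi_star_def vs[abs_def] S.psil_eq S.Pw_def ..
  have "psi_star P \<beta> r c M F X = S.psil" "v_star \<beta> r c M F X = S.w"
    using ps vs by auto
  then show ?thesis using S.psil_cont S.w_cont by simp
qed


end
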